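(* For a greedy policy and an alternating policy applied to the same label sequences, with match counts $M_{\mathbf G}(n)$ and $M_{\mathbf A}(n)$ respectively, $$\lim_{n\to\infty}\frac{\mathbb E\bigl(M_{\mathbf G}(n)-M_{\mathbf A}(n)\bigr)}{n}=\frac{\sigma_{\mathbf R}^2+\sigma_{\mathbf S}^2}{8\mu}.$$
   Context: Let $(r_i)_{i\ge1}$, $(s_i)_{i\ge1}$ be probability vectors on the positive integers with $\mu:=\sum_i r_is_i>0$. Let $\{L_{\mathbf R}(n)\}_{n\ge1}$, $\{L_{\mathbf S}(n)\}_{n\ge1}$ be independent i.i.d. sequences with $\Pr(L_{\mathbf R}(1)=i)=r_i$, $\Pr(L_{\mathbf S}(1)=i)=s_i$. For $m\ge0$ let $\tilde N_{\mathbf R}(m)$ be the vector with entries $N_{\mathbf R}(m,i)=\sum_{j=1}^m\mathbf 1\{L_{\mathbf R}(j)=i\}$, and $\tilde N_{\mathbf S}(m)$ analogously. Put $X_{\mathbf R}(n)=s_{L_{\mathbf R}(n)}$, $X_{\mathbf S}(n)=r_{L_{\mathbf S}(n)}$ (common mean $\mu$, variances $\sigma_{\mathbf R}^2,\sigma_{\mathbf S}^2$; standing assumption $\sigma_{\mathbf R}+\sigma_{\mathbf S}>0$), $\Gamma_{\mathbf R}[m]=\sum_{j=1}^mX_{\mathbf R}(j)$, $\Gamma_{\mathbf S}[m]=\sum_{j=1}^mX_{\mathbf S}(j)$. A reading policy is a $\{0,1\}$-valued process $C(n)$ ($C(n)=1$ iff the $n$-th record is read from $\mathbf R$), $R(n)=\sum_{j\le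 n}C(j)$, $S(n)=n-R(n)$, with $C(n)$ being $\mathcal F_{n-1}$-measurable where $\mathcal F_n=\mathcal F_0\vee\sigma(L_{\mathbf R}(1),\dots,L_{\mathbf R}(R(n));L_{\mathbf S}(1),\dots,L_{\mathbf S}(S(n)))$ and $\mathcal F_0$ (randomization, for both policies) is independent of the labels. Matches: $M(n)=\tilde N_{\mathbf R}(R(n))\cdot\tilde N_{\mathbf S}(S(n))$. An alternating policy is $\mathcal F_0$-measurable with $R(2n)=n$ for all $n$. A greedy policy satisfies, for $n\ge1$, $C(n+1)=1$ if $\Gamma_{\mathbf S}[S(n)]>\Gamma_{\mathbf R}[R(n)]$ and $C(n+1)=0$ if $\Gamma_{\mathbf S}[S(n)]<\Gamma_{\mathbf R}[R(n)]$ (ties arbitrary). *)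

theory Defs
  imports "HOL-Probability.Probability"
begin

text \<open>C n w = True iff the n-th record (n >= 1) is read from R.\<close>

definition Rcnt :: "(nat \<Rightarrow> 'a \<Rightarrow> bool) \<Rightarrow> nat \<Rightarrow> 'a \<Rightarrow> nat" where
  "Rcnt C n w = card {j \<in> {1..n}. C j w}"

definition Scnt :: "(nat \<Rightarrow> 'a \<Rightarrow> bool) \<Rightarrow> nat \<Rightarrow> 'a \<Rightarrow> nat" where
  "Scnt C n w = n - Rcnt C n w"

definition Ncnt :: "(nat \<Rightarrow> 'a \<Rightarrow> nat) \<Rightarrow> nat \<Rightarrow> nat \<Rightarrow> 'a \<Rightarrow> nat" where
  "Ncnt L m i w = card {j \<in> {1..m}. L j w = i}"

text \<open>M(n) = N_R(R(n)) . N_S(S(n)) (dot product; only finitely many nonzero terms).\<close>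
definition matches ::
  "(nat \<Rightarrow> 'a \<Rightarrow> nat) \<Rightarrow> (nat \<Rightarrow> 'a \<Rightarrow> nat) \<Rightarrow> (nat \<Rightarrow> 'a \<Rightarrow> bool) \<Rightarrow> nat \<Rightarrow> 'a \<Rightarrow> nat" where
  "matches LR LS C n w =
     (\<Sum>i | 0 < Ncnt LR (Rcnt C n w) i w.
        Ncnt LR (Rcnt C n w) i w * Ncnt LS (Scnt C n w) i w)"

text \<open>Gamma[m] = sum_{j=1}^m wt(L j); Gamma_R uses wt = s on L_R, Gamma_S uses wt = r on L_S.\<close>
definition Gamma :: "(nat \<Rightarrow> real) \<Rightarrow> (nat \<Rightarrow> 'a \<Rightarrow> nat) \<Rightarrow> nat \<Rightarrow> 'a \<Rightarrow> real" where
  "Gamma wt L m w = (\<Sum>j = 1..m. wt (L j w))"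

text \<open>The first m labels of a sequence (None marks "not yet read").\<close>
definition trunc :: "(nat \<Rightarrow> 'a \<Rightarrow> nat) \<Rightarrow> nat \<Rightarrow> 'a \<Rightarrow> nat \<Rightarrow> nat option" where
  "trunc L m w = (\<lambda>j. if 1 \<le> j \<and> j \<le> m then Some (L j w) else None)"

text \<open>F_n = F_0 v sigma(L_R(1..R(n)), L_S(1..S(n))), with F_0 = sigma(U).\<close>
definition info_alg ::
  "'a measure \<Rightarrow> ('a \<Rightarrow> 'u) \<Rightarrow> 'u measure \<Rightarrow> (nat \<Rightarrow> 'a \<Rightarrow> nat) \<Rightarrow> (nat \<Rightarrow> 'a \<Rightarrow> nat)
    \<Rightarrow> (nat \<Rightarrow> 'a \<Rightarrow> bool) \<Rightarrow> nat \<Rightarrow> 'a measure" where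
  "info_alg M U N LR LS C n =
     vimage_algebra (space M)
       (\<lambda>w. (U w, trunc LR (Rcnt C n w) w, trunc LS (Scnt C n w) w))
       (N \<Otimes>\<^sub>M (PiM UNIV (\<lambda>_::nat. count_space UNIV) \<Otimes>\<^sub>M PiM UNIV (\<lambda>_::nat. count_space UNIV)))"

definition reading_policy ::
  "'a measure \<Rightarrow> ('a \<Rightarrow> 'u) \<Rightarrow> 'u measure \<Rightarrow> (nat \<Rightarrow> 'a \<Rightarrow> nat) \<Rightarrow> (nat \<Rightarrow> 'a \<Rightarrow> nat)
    \<Rightarrow> (nat \<Rightarrow> 'a \<Rightarrow> bool) \<Rightarrow> bool" where
  "reading_policy M U N LR LS C \<longleftrightarrow>
     (\<forall>n\<ge>1. C n \<in> measurable (info_alg M U N LR LS C (n - 1)) (count_space UNIV))"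

definition greedy_policy ::
  "'a measure \<Rightarrow> ('a \<Rightarrow> 'u) \<Rightarrow> 'u measure \<Rightarrow> (nat \<Rightarrow> real) \<Rightarrow> (nat \<Rightarrow> real)
    \<Rightarrow> (nat \<Rightarrow> 'a \<Rightarrow> nat) \<Rightarrow> (nat \<Rightarrow> 'a \<Rightarrow> nat) \<Rightarrow> (nat \<Rightarrow> 'a \<Rightarrow> bool) \<Rightarrow> bool" where
  "greedy_policy M U N r s LR LS C \<longleftrightarrow>
     reading_policy M U N LR LS C \<and>
     (\<forall>n\<ge>1. \<forall>w\<in>space M.
        (Gamma r LS (Scnt C n w) w > Gamma s LR (Rcnt C n w) w \<longrightarrow> C (Suc n) w) \<and>
        (Gamma r LS (Scnt C n w) w < Gamma s LR (Rcnt C n w) w \<longrightarrow> \<not> C (Suc n) w))"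

definition alternating_policy ::
  "'a measure \<Rightarrow> ('a \<Rightarrow> 'u) \<Rightarrow> 'u measure \<Rightarrow> (nat \<Rightarrow> 'a \<Rightarrow> bool) \<Rightarrow> bool" where
  "alternating_policy M U N C \<longleftrightarrow>
     (\<forall>n. C n \<in> measurable (vimage_algebra (space M) U N) (count_space UNIV)) \<and>
     (\<forall>n. \<forall>w\<in>space M. Rcnt C (2 * n) w = n)"

end

theory Submission
  imports Defs
begin

lemma (in prob_space) indep_integral:
  fixes X :: "'a \<Rightarrow> 'b" and Y :: "'a \<Rightarrow> 'c" and F :: "'b \<times> 'c \<Rightarrow> real"
  assumes X[measurable]: "X \<in> measurable M S" and Y[measurable]: "Y \<in> measurable M T"
    and ind: "\<And>A B. A \<in> sets S \<Longrightarrow> B \<in> sets T \<Longrightarrow>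
       prob {w\<in>space M. X w \<in> A \<and> Y w \<in> B} = prob {w\<in>space M. X w \<in> A} * prob {w\<in>space M. Y w \<in> B}"
    and F[measurable]: "F \<in> borel_measurable (S \<Otimes>\<^sub>M T)" and Fb: "\<And>z. \<bar>F z\<bar> \<le> B"
  shows "expectation (\<lambda>w. F (X w, Y w)) = expectation (\<lambda>w. \<integral>y. F (X w, y) \<partial>distr M T Y)"
proof -
  interpret PX: prob_space "distr M S X" by (rule prob_space_distr[OF X])
  interpret PY: prob_space "distr M T Y" by (rule prob_space_distr[OF Y])
  interpret P: pair_prob_space "distr M S X" "distr M T Y" ..
  have XY: "(\<lambda>w. (X w, Y w)) \<in> measurable M (S \<Otimes>\<^sub>M T)" by measurable
  have eq: "distr M S X \<Otimes>\<^sub>M distr M T Y = distr M (S \<Otimes>\<^sub>M T) (\<lambda>w. (X w, Y w))"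
  proof (rule pair_measure_eqI)
    show "sigma_finite_measure (distr M S X)" ..
    show "sigma_finite_measure (distr M T Y)" ..
    show "sets (distr M S X \<Otimes>\<^sub>M distr M T Y) = sets (distr M (S \<Otimes>\<^sub>M T) (\<lambda>w. (X w, Y w)))" by simp
  next
    fix A B' assume A: "A \<in> sets (distr M S X)" and B': "B' \<in> sets (distr M T Y)"
    then have A': "A \<in> sets S" and B'': "B' \<in> sets T" by auto
    have "emeasure (distr M (S \<Otimes>\<^sub>M T) (\<lambda>w. (X w, Y w))) (A \<times> B') = emeasure M ((\<lambda>w. (X w, Y w)) -` (A \<times> B') \<inter> space M)"
      using A' B'' by (intro emeasure_distr[OF XY]) auto
    also have "(\<lambda>w. (X w, Y w)) -` (A \<times> B') \<inter> space M = {w\<in>space M. X w \<in> A \<and> Y w \<in> B'}" by auto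
    also have "emeasure M {w\<in>space M. X w \<in> A \<and> Y w \<in> B'} = ennreal (prob {w\<in>space M. X w \<in> A} * prob {w\<in>space M. Y w \<in> B'})"
      using ind[OF A' B''] by (simp add: emeasure_eq_measure)
    also have "\<dots> = emeasure (distr M S X) A * emeasure (distr M T Y) B'"
      using A' B'' by (simp add: emeasure_distr emeasure_eq_measure ennreal_mult measure_nonneg vimage_def Int_def conj_commute)
    finally show "emeasure (distr M S X) A * emeasure (distr M T Y) B' = emeasure (distr M (S \<Otimes>\<^sub>M T) (\<lambda>w. (X w, Y w))) (A \<times> B')" by simp
  qed
  have Fm: "F \<in> borel_measurable (distr M S X \<Otimes>\<^sub>M distr M T Y)"
    using F by (simp add: measurable_cong_sets[OF sets_pair_measure_cong[OF sets_distr sets_distr] refl])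
  have Fi: "integrable (distr M S X \<Otimes>\<^sub>M distr M T Y) F"
    by (rule P.integrable_const_bound[where B=B]) (use Fb Fm in auto)
  have "expectation (\<lambda>w. F (X w, Y w)) = integral\<^sup>L (distr M (S \<Otimes>\<^sub>M T) (\<lambda>w. (X w, Y w))) F"
    by (rule integral_distr[symmetric, OF XY F])
  also have "\<dots> = integral\<^sup>L (distr M S X \<Otimes>\<^sub>M distr M T Y) F" by (simp add: eq)
  also have "\<dots> = (\<integral>x. (\<integral>y. F (x, y) \<partial>distr M T Y) \<partial>distr M S X)"
    by (rule P.integral_fst'[symmetric, OF Fi])
  also have "\<dots> = expectation (\<lambda>w. \<integral>y. F (X w, y) \<partial>distr M T Y)"
  proof (rule integral_distr[OF X])
    have "(\<lambda>x. \<integral>y. F (x, y) \<partial>distr M T Y) \<in> borel_measurable (distr M S X)"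
      by (rule PY.borel_measurable_lebesgue_integral) (use Fm in simp)
    then show "(\<lambda>x. \<integral>y. F (x, y) \<partial>distr M T Y) \<in> borel_measurable S" by simp
  qed
  finally show ?thesis .
qed

locale setting = prob_space M for M :: "'a measure" +
  fixes N :: "'u measure" and U :: "'a \<Rightarrow> 'u"
    and r s :: "nat \<Rightarrow> real"
    and LR LS :: "nat \<Rightarrow> 'a \<Rightarrow> nat"
  assumes r_prob: "r 0 = 0" "\<forall>i. 0 \<le> r i" "r sums 1"
    and s_prob: "s 0 = 0" "\<forall>i. 0 \<le> s i" "s sums 1"
    and U_meas: "U \<in> measurable M N"
    and LR_meas: "\<forall>j. LR j \<in> measurable M (count_space UNIV)"
    and LS_meas: "\<forall>j. LS j \<in> measurable M (count_space UNIV)"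
    and LR_dist: "\<forall>j\<ge>1. \<forall>i. prob {w \<in> space M. LR j w = i} = r i"
    and LS_dist: "\<forall>j\<ge>1. \<forall>i. prob {w \<in> space M. LS j w = i} = s i"
    and labels_indep: "indep_vars (\<lambda>_. count_space UNIV)
        (\<lambda>k w. case k of Inl j \<Rightarrow> LR j w | Inr j \<Rightarrow> LS j w) ({1..} <+> {1..})"
    and U_indep: "indep_set (sets (vimage_algebra (space M) U N))
        (sets (vimage_algebra (space M)
           (\<lambda>w k. case k of Inl j \<Rightarrow> LR (Suc j) w | Inr j \<Rightarrow> LS (Suc j) w)
           (PiM UNIV (\<lambda>_::nat + nat. count_space UNIV))))"
begin

abbreviation "PP \<equiv> PiM UNIV (\<lambda>_::nat. count_space (UNIV :: nat option set))"
definition "Tm = N \<Otimes>\<^sub>M (PP \<Otimes>\<^sub>M PP)"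
definition "V j b w = (U w, trunc LR j w, trunc LS b w)"
definition "Lab w k = (case k of Inl j \<Rightarrow> LR j w | Inr j \<Rightarrow> LS j w)"
definition "Lab' w k = (case k of Inl j \<Rightarrow> LR (Suc j) w | Inr j \<Rightarrow> LS (Suc j) w)"
definition "KK j b = Inl ` {1..j} \<union> Inr ` {1..b}"

lemma LR_m[measurable]: "LR j \<in> measurable M (count_space UNIV)" using LR_meas by auto
lemma LS_m[measurable]: "LS j \<in> measurable M (count_space UNIV)" using LS_meas by auto
lemma U_m[measurable]: "U \<in> measurable M N" using U_meas by auto

definition "phi j b = (\<lambda>(u::'u, f::nat+nat\<Rightarrow>nat). (u, (\<lambda>i. if 1 \<le> i \<and> i \<le> j then Some (f (Inl i)) else None),
     (\<lambda>i. if 1 \<le> i \<and> i \<le> b then Some (f (Inr i)) else None)))"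

lemma PP_fun_meas:
  assumes "\<And>i. (\<lambda>x. g x i) \<in> measurable A (count_space UNIV)"
  shows "(\<lambda>x. g x) \<in> measurable A PP"
proof -
  have "(\<lambda>x. \<lambda>i\<in>UNIV. g x i) \<in> measurable A PP"
    by (rule measurable_restrict) (use assms in auto)
  moreover have "(\<lambda>x. \<lambda>i\<in>UNIV. g x i) = g" by (auto simp: restrict_def)
  ultimately show ?thesis by simp
qed

lemma phi_meas: "phi j b \<in> measurable (N \<Otimes>\<^sub>M PiM (KK j b) (\<lambda>_. count_space UNIV)) Tm"
  unfolding Tm_def phi_def
proof (simp add: split_beta', intro measurable_Pair PP_fun_meas)
  fix i
  show "(\<lambda>x. if Suc 0 \<le> i \<and> i \<le> j then Some (snd x (Inl i)) else None)
     \<in> measurable (N \<Otimes>\<^sub>M PiM (KK j b) (\<lambda>_. count_space UNIV)) (count_space UNIV)"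
  proof (cases "Suc 0 \<le> i \<and> i \<le> j")
    case True
    then have "Inl i \<in> KK j b" by (auto simp: KK_def)
    then have "(\<lambda>x. snd x (Inl i)) \<in> measurable (N \<Otimes>\<^sub>M PiM (KK j b) (\<lambda>_. count_space UNIV)) (count_space UNIV)"
      by (intro measurable_compose[OF measurable_snd measurable_component_singleton])
    then have "(\<lambda>x. Some (snd x (Inl i))) \<in> measurable (N \<Otimes>\<^sub>M PiM (KK j b) (\<lambda>_. count_space UNIV)) (count_space UNIV)"
      by (rule measurable_compose) (rule measurable_count_space)
    then show ?thesis using True by simp
  next
    case False
    then show ?thesis by (cases "Suc 0 \<le> i") simp_all
  qed
  show "(\<lambda>x. if Suc 0 \<le> i \<and> i \<le> b then Some (snd x (Inr i)) else None)
     \<in> measurable (N \<Otimes>\<^sub>M PiM (KK j b) (\<lambda>_. count_space UNIV)) (count_space UNIV)"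
  proof (cases "Suc 0 \<le> i \<and> i \<le> b")
    case True
    then have "Inr i \<in> KK j b" by (auto simp: KK_def)
    then have "(\<lambda>x. snd x (Inr i)) \<in> measurable (N \<Otimes>\<^sub>M PiM (KK j b) (\<lambda>_. count_space UNIV)) (count_space UNIV)"
      by (intro measurable_compose[OF measurable_snd measurable_component_singleton])
    then have "(\<lambda>x. Some (snd x (Inr i))) \<in> measurable (N \<Otimes>\<^sub>M PiM (KK j b) (\<lambda>_. count_space UNIV)) (count_space UNIV)"
      by (rule measurable_compose) (rule measurable_count_space)
    then show ?thesis using True by simp
  next
    case False
    then show ?thesis by (cases "Suc 0 \<le> i") simp_all
  qed
qed simp

lemma Lab_m: "(\<lambda>w. Lab w k) \<in> measurable M (count_space UNIV)"
  by (cases k) (auto simp: Lab_def)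

lemma W_meas: "(\<lambda>w. (U w, restrict (Lab w) (KK j b))) \<in> measurable M (N \<Otimes>\<^sub>M PiM (KK j b) (\<lambda>_. count_space UNIV))"
  by (intro measurable_Pair U_m measurable_restrict Lab_m)

lemma V_phi: "V j b w = phi j b (U w, restrict (Lab w) (KK j b))"
  by (auto simp: V_def phi_def trunc_def KK_def Lab_def fun_eq_iff)

lemma V_meas[measurable]: "V j b \<in> measurable M Tm"
proof -
  have "(\<lambda>w. phi j b (U w, restrict (Lab w) (KK j b))) \<in> measurable M Tm"
    using measurable_comp[OF W_meas phi_meas] by (simp add: comp_def)
  then show ?thesis by (simp add: V_phi[abs_def])
qed

definition "sh k = (case k of Inl i \<Rightarrow> Inl (i - 1) | Inr i \<Rightarrow> Inr (i - 1 :: nat))"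

lemma Lab'_fold: "(\<lambda>w k. case k of Inl j \<Rightarrow> LR (Suc j) w | Inr j \<Rightarrow> LS (Suc j) w) = Lab'"
  by (auto simp: Lab'_def fun_eq_iff)

lemma Lab_sh: "k \<in> ({1..} <+> {1..}) \<Longrightarrow> Lab w k = Lab' w (sh k)"
  by (auto simp: Lab_def Lab'_def sh_def)

lemma labalg:
  assumes g: "g \<in> measurable (PiM UNIV (\<lambda>_::nat+nat. count_space (UNIV::nat set))) X" and A: "A \<in> sets X"
  shows "{w \<in> space M. g (Lab' w) \<in> A} \<in> sets (vimage_algebra (space M) Lab' (PiM UNIV (\<lambda>_::nat + nat. count_space UNIV)))"
proof -
  have "{w \<in> space M. g (Lab' w) \<in> A} = Lab' -` (g -` A \<inter> space (PiM UNIV (\<lambda>_::nat+nat. count_space (UNIV::nat set)))) \<inter> space M"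
    by (auto simp: space_PiM)
  also have "\<dots> \<in> sets (vimage_algebra (space M) Lab' (PiM UNIV (\<lambda>_::nat + nat. count_space UNIV)))"
    by (rule in_vimage_algebra) (rule measurable_sets[OF g A])
  finally show ?thesis .
qed

lemma KK_sub: "KK j b \<subseteq> ({1..} <+> {1..})"
  by (auto simp: KK_def)

lemma indep_lab:
  assumes k0: "k0 \<in> ({1..} <+> {1..})" "k0 \<notin> KK j b"
    and A: "A \<in> sets Tm"
  shows "prob {w \<in> space M. V j b w \<in> A \<and> Lab w k0 \<in> C} = prob {w \<in> space M. V j b w \<in> A} * prob {w \<in> space M. Lab w k0 \<in> C}"
proof -
  let ?K = "KK j b"
  let ?PK = "PiM ?K (\<lambda>_. count_space (UNIV::nat set))"
  let ?P = "PiM UNIV (\<lambda>_::nat+nat. count_space (UNIV::nat set))"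
  let ?cs = "count_space (UNIV::nat set)"
  define La where "La w = restrict (Lab w) ?K" for w
  define L where "L w = Lab w k0" for w
  define psi where "psi f = restrict (\<lambda>k. f (sh k)) ?K" for f :: "nat+nat \<Rightarrow> nat"
  define LA where "LA = sets (vimage_algebra (space M) Lab' ?P)"
  have Ui: "indep_set (sets (vimage_algebra (space M) U N)) LA"
    using U_indep unfolding Lab'_fold LA_def .
  have psi_m: "psi \<in> measurable ?P ?PK"
    unfolding psi_def by (intro measurable_restrict measurable_component_singleton) auto
  have ev_m: "(\<lambda>f. f (sh k0)) \<in> measurable ?P ?cs"
    by (intro measurable_component_singleton) auto
  have La_psi: "La w = psi (Lab' w)" for w
    unfolding La_def psi_def by (auto simp: fun_eq_iff restrict_def intro!: Lab_sh dest: subsetD[OF KK_sub])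
  have L_sh: "L w = Lab' w (sh k0)" for w
    unfolding L_def using k0 by (simp add: Lab_sh)
  have ind1: "indep_var ?PK La (PiM {k0} (\<lambda>_. ?cs)) (\<lambda>w. restrict (Lab w) {k0})"
  proof -
    have "KK j b \<inter> {k0} = {}" "{k0} \<subseteq> ({1..} <+> {1..})" using k0 by auto
    from indep_var_restrict[OF labels_indep this(1) KK_sub this(2)]
    show ?thesis unfolding La_def by (simp add: Lab_def[abs_def])
  qed
  have ind2: "prob {w \<in> space M. La w \<in> B \<and> L w \<in> C} = prob (La -` B \<inter> space M) * prob (L -` C \<inter> space M)"
    if B: "B \<in> sets ?PK" for B C
  proof -
    have C': "((\<lambda>f. f k0) -` C \<inter> space (PiM {k0} (\<lambda>_. ?cs))) \<in> sets (PiM {k0} (\<lambda>_. ?cs))"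
      by (rule measurable_sets[OF measurable_component_singleton[of k0 "{k0}" "\<lambda>_. ?cs"]]) auto
    have "prob ((\<lambda>x. (La x, restrict (Lab x) {k0})) -` (B \<times> ((\<lambda>f. f k0) -` C \<inter> space (PiM {k0} (\<lambda>_. ?cs)))) \<inter> space M)
       = prob (La -` B \<inter> space M) * prob ((\<lambda>x. restrict (Lab x) {k0}) -` ((\<lambda>f. f k0) -` C \<inter> space (PiM {k0} (\<lambda>_. ?cs))) \<inter> space M)"
      by (rule indep_varD[OF ind1 B C'])
    moreover have "(\<lambda>x. (La x, restrict (Lab x) {k0})) -` (B \<times> ((\<lambda>f. f k0) -` C \<inter> space (PiM {k0} (\<lambda>_. ?cs)))) \<inter> space M
       = {w \<in> space M. La w \<in> B \<and> L w \<in> C}"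
      by (auto simp: L_def space_PiM)
    moreover have "(\<lambda>x. restrict (Lab x) {k0}) -` ((\<lambda>f. f k0) -` C \<inter> space (PiM {k0} (\<lambda>_. ?cs))) \<inter> space M = L -` C \<inter> space M"
      by (auto simp: L_def space_PiM)
    ultimately show ?thesis by simp
  qed
  have La_m: "La \<in> measurable M ?PK"
    unfolding La_def by (intro measurable_restrict Lab_m)
  have L_m: "L \<in> measurable M ?cs" unfolding L_def[abs_def] by (rule Lab_m)
  define G where "G = {{w \<in> space M. U w \<in> A \<and> La w \<in> B} | A B. A \<in> sets N \<and> B \<in> sets ?PK}"
  define H where "H = {L -` C \<inter> space M | C. C \<in> sets ?cs}"
  have Uset: "{w \<in> space M. U w \<in> A} \<in> sets (vimage_algebra (space M) U N)" if "A \<in> sets N" for A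
  proof -
    have "{w \<in> space M. U w \<in> A} = U -` A \<inter> space M" by auto
    then show ?thesis using in_vimage_algebra[OF that] by simp
  qed
  have LaB: "{w \<in> space M. La w \<in> B} \<in> LA" if "B \<in> sets ?PK" for B
    unfolding LA_def La_psi by (rule labalg[OF psi_m that])
  have LaBC: "{w \<in> space M. La w \<in> B \<and> L w \<in> C} \<in> LA" if "B \<in> sets ?PK" for B C
  proof -
    have "(\<lambda>f. (psi f, f (sh k0))) \<in> measurable ?P (?PK \<Otimes>\<^sub>M ?cs)"
      by (intro measurable_Pair psi_m ev_m)
    from labalg[OF this, of "B \<times> C"] that
    show ?thesis unfolding LA_def La_psi L_sh by simp
  qed
  have indGH: "indep_set G H"
  proof (rule indep_setI)
    show "G \<subseteq> events" unfolding G_def using La_m by auto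
    show "H \<subseteq> events" unfolding H_def using L_m by (auto intro: measurable_sets)
  next
    fix a h assume "a \<in> G" "h \<in> H"
    then obtain A B C where AB: "A \<in> sets N" "B \<in> sets ?PK" and a: "a = {w \<in> space M. U w \<in> A \<and> La w \<in> B}"
      and h: "h = L -` C \<inter> space M"
      unfolding G_def H_def by auto
    have "a \<inter> h = {w \<in> space M. U w \<in> A} \<inter> {w \<in> space M. La w \<in> B \<and> L w \<in> C}"
      unfolding a h by auto
    then have "prob (a \<inter> h) = prob {w \<in> space M. U w \<in> A} * prob {w \<in> space M. La w \<in> B \<and> L w \<in> C}"
      using indep_setD[OF Ui Uset[OF AB(1)] LaBC[OF AB(2)]] by simp
    also have "prob {w \<in> space M. La w \<in> B \<and> L w \<in> C} = prob {w \<in> space M. La w \<in> B} * prob h"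
    proof -
      note ind2[OF AB(2), of C]
      moreover have "La -` B \<inter> space M = {w \<in> space M. La w \<in> B}" by auto
      ultimately show ?thesis unfolding h by simp
    qed
    also have "prob a = prob {w \<in> space M. U w \<in> A} * prob {w \<in> space M. La w \<in> B}"
    proof -
      have "a = {w \<in> space M. U w \<in> A} \<inter> {w \<in> space M. La w \<in> B}" unfolding a by auto
      then show ?thesis using indep_setD[OF Ui Uset[OF AB(1)] LaB[OF AB(2)]] by simp
    qed
    ultimately show "prob (a \<inter> h) = prob a * prob h" by (simp add: ac_simps)
  qed
  have stG: "Int_stable G"
  proof (rule Int_stableI)
    fix a a' assume "a \<in> G" "a' \<in> G"
    then obtain A B A' B' where "A \<in> sets N" "B \<in> sets ?PK" "a = {w \<in> space M. U w \<in> A \<and> La w \<in> B}"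
       "A' \<in> sets N" "B' \<in> sets ?PK" "a' = {w \<in> space M. U w \<in> A' \<and> La w \<in> B'}"
      unfolding G_def by blast
    then show "a \<inter> a' \<in> G" unfolding G_def
      by (intro CollectI exI[of _ "A \<inter> A'"] exI[of _ "B \<inter> B'"]) auto
  qed
  have stH: "Int_stable H"
  proof (rule Int_stableI)
    fix a a' assume "a \<in> H" "a' \<in> H"
    then obtain C C' where "a = L -` C \<inter> space M" "a' = L -` C' \<inter> space M"
      unfolding H_def by blast
    then show "a \<inter> a' \<in> H" unfolding H_def
      by (intro CollectI exI[of _ "C \<inter> C'"]) auto
  qed
  have indS: "indep_set (sigma_sets (space M) G) (sigma_sets (space M) H)"
    by (rule indep_set_sigma_sets[OF indGH stG stH])
  define W where "W w = (U w, La w)" for w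
  have W_m: "W \<in> measurable M (N \<Otimes>\<^sub>M ?PK)"
    unfolding W_def[abs_def] by (intro measurable_Pair U_m La_m)
  have VW: "V j b w = phi j b (W w)" for w unfolding W_def La_def by (rule V_phi)
  have sub: "{V j b -` E \<inter> space M | E. E \<in> sets Tm} \<subseteq> sigma_sets (space M) G"
  proof safe
    fix E assume E: "E \<in> sets Tm"
    let ?E' = "phi j b -` E \<inter> space (N \<Otimes>\<^sub>M ?PK)"
    have E': "?E' \<in> sets (N \<Otimes>\<^sub>M ?PK)" by (rule measurable_sets[OF phi_meas E])
    have eq: "V j b -` E \<inter> space M = W -` ?E' \<inter> space M"
      using measurable_space[OF W_m] by (auto simp: VW)
    have Wf: "W \<in> space M \<rightarrow> space N \<times> space ?PK"
      using measurable_space[OF W_m] by (auto simp: space_pair_measure)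
    have "W -` ?E' \<inter> space M \<in> {W -` A \<inter> space M |A. A \<in> sigma_sets (space N \<times> space ?PK) {a \<times> b | a b. a \<in> sets N \<and> b \<in> sets ?PK}}"
      using E' unfolding sets_pair_measure by blast
    also have "\<dots> = sigma_sets (space M) {W -` A \<inter> space M |A. A \<in> {a \<times> b | a b. a \<in> sets N \<and> b \<in> sets ?PK}}"
      by (rule sigma_sets_vimage_commute[OF Wf])
    also have "\<dots> \<subseteq> sigma_sets (space M) G"
    proof (rule sigma_sets_subseteq, safe)
      fix a b assume "a \<in> sets N" "b \<in> sets ?PK"
      then show "W -` (a \<times> b) \<inter> space M \<in> G" unfolding G_def W_def by auto
    qed
    finally show "V j b -` E \<inter> space M \<in> sigma_sets (space M) G" unfolding eq .
  qed
  have "indep_set (sigma_sets (space M) {V j b -` E \<inter> space M | E. E \<in> sets Tm}) (sigma_sets (space M) H)"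
    using indS unfolding indep_set_def
    by (rule indep_sets_mono_sets) (use sigma_sets_mono[OF sub] in \<open>auto split: bool.split\<close>)
  moreover have "V j b -` A \<inter> space M \<in> sigma_sets (space M) {V j b -` E \<inter> space M | E. E \<in> sets Tm}"
    using A by auto
  moreover have "L -` C \<inter> space M \<in> sigma_sets (space M) H"
    unfolding H_def by auto
  ultimately have "prob ((V j b -` A \<inter> space M) \<inter> (L -` C \<inter> space M)) = prob (V j b -` A \<inter> space M) * prob (L -` C \<inter> space M)"
    by (rule indep_setD)
  moreover have "(V j b -` A \<inter> space M) \<inter> (L -` C \<inter> space M) = {w \<in> space M. V j b w \<in> A \<and> Lab w k0 \<in> C}"
    by (auto simp: L_def)
  ultimately show ?thesis by (simp add: L_def vimage_def Int_def conj_commute)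
qed

end

lemma Rcnt_0[simp]: "Rcnt C 0 w = 0" by (simp add: Rcnt_def)

lemma Rcnt_Suc: "Rcnt C (Suc k) w = Rcnt C k w + (if C (Suc k) w then 1 else 0)"
proof -
  have "{j \<in> {1..Suc k}. C j w} = {j \<in> {1..k}. C j w} \<union> (if C (Suc k) w then {Suc k} else {})"
    by (auto simp: le_Suc_eq)
  then show ?thesis by (simp add: Rcnt_def)
qed

lemma Rcnt_le: "Rcnt C k w \<le> k"
proof -
  have "card {j \<in> {1..k}. C j w} \<le> card {1..k}" by (rule card_mono) auto
  then show ?thesis by (simp add: Rcnt_def)
qed

context setting begin

lemma Tm_comp1: "(\<lambda>v. fst (snd v) i) \<in> measurable Tm (count_space UNIV)"
  unfolding Tm_def
  by (rule measurable_compose[OF measurable_compose[OF measurable_snd measurable_fst] measurable_component_singleton]) simp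
lemma Tm_comp2: "(\<lambda>v. snd (snd v) i) \<in> measurable Tm (count_space UNIV)"
  unfolding Tm_def
  by (rule measurable_compose[OF measurable_compose[OF measurable_snd measurable_snd] measurable_component_singleton]) simp
lemma Tm_fst: "(\<lambda>v. fst v) \<in> measurable Tm N"
  unfolding Tm_def by (rule measurable_fst'') (rule measurable_ident_sets, simp)

lemma V_lift:
  assumes "j \<le> j'" "b \<le> b'" "A \<in> sets Tm"
  shows "\<exists>A'\<in>sets Tm. V j b -` A \<inter> space M = V j' b' -` A' \<inter> space M"
proof -
  define pi where "pi v = (fst v, \<lambda>i. if i \<le> j then fst (snd v) i else None, \<lambda>i. if i \<le> b then snd (snd v) i else None)"
    for v :: "'u \<times> (nat \<Rightarrow> nat option) \<times> (nat \<Rightarrow> nat option)"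
  have pim: "pi \<in> measurable Tm Tm"
    unfolding pi_def
  proof (subst (2) Tm_def, intro measurable_Pair PP_fun_meas Tm_fst)
    fix i
    show "(\<lambda>x. if i \<le> j then fst (snd x) i else None) \<in> measurable Tm (count_space UNIV)"
      by (cases "i \<le> j") (simp_all add: Tm_comp1)
    show "(\<lambda>x. if i \<le> b then snd (snd x) i else None) \<in> measurable Tm (count_space UNIV)"
      by (cases "i \<le> b") (simp_all add: Tm_comp2)
  qed
  have "V j b w = pi (V j' b' w)" for w
    using assms by (auto simp: V_def pi_def trunc_def fun_eq_iff)
  then have "V j b -` A \<inter> space M = V j' b' -` (pi -` A \<inter> space Tm) \<inter> space M"
    using measurable_space[OF V_meas] by auto
  moreover have "pi -` A \<inter> space Tm \<in> sets Tm" by (rule measurable_sets[OF pim assms(3)])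
  ultimately show ?thesis by blast
qed

end

locale policy = setting +
  fixes C :: "nat \<Rightarrow> 'a \<Rightarrow> bool"
  assumes pol: "reading_policy M U N LR LS C"
begin

lemma RC_from_R:
  assumes j: "j \<le> k" and A: "A \<in> sets Tm" and RA: "{w\<in>space M. Rcnt C k w = j} = V j (k-j) -` A \<inter> space M"
  shows "\<exists>A'\<in>sets Tm. {w\<in>space M. Rcnt C k w = j \<and> C (Suc k) w} = V j (k-j) -` A' \<inter> space M"
proof -
  define Wk where "Wk w = (U w, trunc LR (Rcnt C k w) w, trunc LS (Scnt C k w) w)" for w
  have Cm: "C (Suc k) \<in> measurable (info_alg M U N LR LS C k) (count_space UNIV)"
    using pol unfolding reading_policy_def by (metis diff_Suc_1 le_add1 plus_1_eq_Suc)
  have "C (Suc k) -` {True} \<inter> space (info_alg M U N LR LS C k) \<in> sets (info_alg M U N LR LS C k)"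
    by (rule measurable_sets[OF Cm]) simp
  moreover have "space (info_alg M U N LR LS C k) = space M" by (simp add: info_alg_def)
  moreover have "sets (info_alg M U N LR LS C k) = {Wk -` B \<inter> space M | B. B \<in> sets Tm}"
  proof -
    have "Wk \<in> space M \<rightarrow> space Tm"
      using measurable_space[OF V_meas] by (auto simp: Wk_def V_def)
    then show ?thesis unfolding info_alg_def Wk_def[abs_def] Tm_def
      by (intro sets_vimage_algebra2) (simp add: Tm_def)
  qed
  ultimately have "C (Suc k) -` {True} \<inter> space M \<in> {Wk -` B \<inter> space M | B. B \<in> sets Tm}" by simp
  then obtain B where B0: "B \<in> sets Tm" "C (Suc k) -` {True} \<inter> space M = Wk -` B \<inter> space M" by blast
  have B: "B \<in> sets Tm" "{w \<in> space M. C (Suc k) w} = Wk -` B \<inter> space M"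
    using B0 by (auto simp: vimage_def)
  have "{w\<in>space M. Rcnt C k w = j \<and> C (Suc k) w} = {w\<in>space M. Rcnt C k w = j} \<inter> {w \<in> space M. C (Suc k) w}" by auto
  also have "\<dots> = {w\<in>space M. Rcnt C k w = j \<and> V j (k-j) w \<in> B}"
    unfolding B(2) by (auto simp: Wk_def V_def Scnt_def)
  also have "\<dots> = {w\<in>space M. Rcnt C k w = j} \<inter> (V j (k-j) -` B \<inter> space M)" by auto
  also have "\<dots> = V j (k-j) -` (A \<inter> B) \<inter> space M"
    unfolding RA by auto
  finally show ?thesis using A B(1) by blast
qed

lemma Rset: "j \<le> k \<Longrightarrow> \<exists>A\<in>sets Tm. {w\<in>space M. Rcnt C k w = j} = V j (k-j) -` A \<inter> space M"
proof (induction k arbitrary: j)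
  case 0
  then have "{w\<in>space M. Rcnt C 0 w = j} = V j (0-j) -` space Tm \<inter> space M"
    using measurable_space[OF V_meas] by auto
  then show ?case by blast
next
  case (Suc k)
  define P1 where "P1 = {w\<in>space M. Rcnt C k w = j \<and> \<not> C (Suc k) w}"
  define P2 where "P2 = {w\<in>space M. Rcnt C k w + 1 = j \<and> C (Suc k) w}"
  have split: "{w\<in>space M. Rcnt C (Suc k) w = j} = P1 \<union> P2"
    by (auto simp: P1_def P2_def Rcnt_Suc)
  have h1: "\<exists>A\<in>sets Tm. P1 = V j (Suc k - j) -` A \<inter> space M"
  proof (cases "j \<le> k")
    case True
    obtain A where A: "A \<in> sets Tm" "{w\<in>space M. Rcnt C k w = j} = V j (k-j) -` A \<inter> space M"
      using Suc.IH[OF True] by blast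
    obtain A' where A': "A' \<in> sets Tm" "{w\<in>space M. Rcnt C k w = j \<and> C (Suc k) w} = V j (k-j) -` A' \<inter> space M"
      using RC_from_R[OF True A] by blast
    have "P1 = V j (k-j) -` (A - A') \<inter> space M"
      using A(2) A'(2) unfolding P1_def by blast
    moreover have "A - A' \<in> sets Tm" using A A' by auto
    ultimately show ?thesis using V_lift[of j j "k-j" "Suc k - j" "A - A'"] by auto
  next
    case False
    then have "P1 = V j (Suc k - j) -` {} \<inter> space M"
      unfolding P1_def using Rcnt_le[of C k] by (auto dest: le_trans)
    then show ?thesis by blast
  qed
  have h2: "\<exists>A\<in>sets Tm. P2 = V j (Suc k - j) -` A \<inter> space M"
  proof (cases "j = 0")
    case True
    then have "P2 = V j (Suc k - j) -` {} \<inter> space M" unfolding P2_def by auto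
    then show ?thesis by blast
  next
    case False
    then have jk: "j - 1 \<le> k" using Suc.prems by auto
    obtain A where A: "A \<in> sets Tm" "{w\<in>space M. Rcnt C k w = j - 1} = V (j-1) (k-(j-1)) -` A \<inter> space M"
      using Suc.IH[OF jk] by blast
    obtain A' where A': "A' \<in> sets Tm" "{w\<in>space M. Rcnt C k w = j - 1 \<and> C (Suc k) w} = V (j-1) (k-(j-1)) -` A' \<inter> space M"
      using RC_from_R[OF jk A] by blast
    have "P2 = {w\<in>space M. Rcnt C k w = j - 1 \<and> C (Suc k) w}"
      unfolding P2_def using False by auto
    then have "P2 = V (j-1) (k-(j-1)) -` A' \<inter> space M" using A' by simp
    then show ?thesis using V_lift[of "j-1" j "k-(j-1)" "Suc k - j" A'] A'(1) False Suc.prems by auto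
  qed
  from h1 h2 obtain A1 A2 where AA: "A1 \<in> sets Tm" "A2 \<in> sets Tm"
    and PP: "P1 = V j (Suc k - j) -` A1 \<inter> space M" "P2 = V j (Suc k - j) -` A2 \<inter> space M" by blast
  have "{w\<in>space M. Rcnt C (Suc k) w = j} = V j (Suc k - j) -` (A1 \<union> A2) \<inter> space M"
    unfolding split PP by (simp only: vimage_Un Int_Un_distrib2)
  moreover have "A1 \<union> A2 \<in> sets Tm" using AA by (rule sets.Un)
  ultimately show ?case by (intro bexI[of _ "A1 \<union> A2"])
qed

lemma RCset: assumes "j \<le> k" shows "\<exists>A\<in>sets Tm. {w\<in>space M. Rcnt C k w = j \<and> C (Suc k) w} = V j (k-j) -` A \<inter> space M"
proof -
  obtain A where "A \<in> sets Tm" "{w\<in>space M. Rcnt C k w = j} = V j (k-j) -` A \<inter> space M"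
    using Rset[OF assms] by blast
  from RC_from_R[OF assms this] show ?thesis .
qed

lemma Rset_sets: "{w\<in>space M. Rcnt C k w = j} \<in> sets M"
proof (cases "j \<le> k")
  case True
  then obtain A where "A \<in> sets Tm" "{w\<in>space M. Rcnt C k w = j} = V j (k-j) -` A \<inter> space M"
    using Rset[OF True] by blast
  then show ?thesis using measurable_sets[OF V_meas] by simp
next
  case False
  then have "{w\<in>space M. Rcnt C k w = j} = {}" using Rcnt_le[of C k] by (auto dest: le_trans)
  then show ?thesis by (simp only: sets.empty_sets)
qed

lemma RCset_sets: "{w\<in>space M. Rcnt C k w = j \<and> C (Suc k) w} \<in> sets M"
proof (cases "j \<le> k")
  case True
  then obtain A where "A \<in> sets Tm" "{w\<in>space M. Rcnt C k w = j \<and> C (Suc k) w} = V j (k-j) -` A \<inter> space M"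
    using RCset[OF True] by blast
  then show ?thesis using measurable_sets[OF V_meas] by simp
next
  case False
  then have "{w\<in>space M. Rcnt C k w = j \<and> C (Suc k) w} = {}" using Rcnt_le[of C k] by (auto dest: le_trans)
  then show ?thesis by (simp only: sets.empty_sets)
qed

lemma Rcnt_meas[measurable]: "(\<lambda>w. Rcnt C k w) \<in> measurable M (count_space UNIV)"
proof (rule measurable_count_space_eq2_countable[THEN iffD2], safe)
  fix a :: nat
  have "(\<lambda>w. Rcnt C k w) -` {a} \<inter> space M = {w\<in>space M. Rcnt C k w = a}" by auto
  then show "(\<lambda>w. Rcnt C k w) -` {a} \<inter> space M \<in> sets M" using Rset_sets by simp
qed auto

lemma C_meas[measurable]: "(\<lambda>w. C (Suc k) w) \<in> measurable M (count_space UNIV)"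
proof -
  have "{w\<in>space M. C (Suc k) w} = (\<Union>j\<in>{..k}. {w\<in>space M. Rcnt C k w = j \<and> C (Suc k) w})"
    using Rcnt_le[of C k] by auto
  also have "\<dots> \<in> sets M" using RCset_sets by auto
  finally have *: "{w\<in>space M. C (Suc k) w} \<in> sets M" .
  have **: "{w\<in>space M. \<not> C (Suc k) w} \<in> sets M"
  proof -
    have "{w\<in>space M. \<not> C (Suc k) w} = space M - {w\<in>space M. C (Suc k) w}" by auto
    then show ?thesis using * by auto
  qed
  show ?thesis
  proof (rule measurable_count_space_eq2_countable[THEN iffD2], safe)
    fix a :: bool
    have "(\<lambda>w. C (Suc k) w) -` {True} \<inter> space M = {w\<in>space M. C (Suc k) w}" by auto
    moreover have "(\<lambda>w. C (Suc k) w) -` {False} \<inter> space M = {w\<in>space M. \<not> C (Suc k) w}" by auto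
    ultimately show "(\<lambda>w. C (Suc k) w) -` {a} \<inter> space M \<in> sets M"
      using * ** by (cases a) simp_all
  qed auto
qed

end

lemma (in prob_space) abs_integral_le:
  fixes f :: "'a \<Rightarrow> real"
  assumes m: "f \<in> borel_measurable M" and b: "\<And>x. \<bar>f x\<bar> \<le> B"
  shows "\<bar>\<integral>x. f x \<partial>M\<bar> \<le> B"
proof -
  have i: "integrable M f" by (rule integrable_const_bound[where B=B]) (use m b in auto)
  have "(\<integral>x. f x \<partial>M) \<le> B" by (rule integral_le_const[OF i]) (use b in \<open>auto simp: abs_le_iff\<close>)
  moreover have "-B \<le> (\<integral>x. f x \<partial>M)"
  proof (rule integral_ge_const[OF i], rule AE_I2)
    fix x show "- B \<le> f x" using b[of x] by linarith
  qed
  ultimately show ?thesis by linarith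
qed

context setting begin

definition "DR = distr M (count_space UNIV) (LR 1)"
definition "DS = distr M (count_space UNIV) (LS 1)"

lemma distr_LR: assumes "j \<ge> 1" shows "distr M (count_space UNIV) (LR j) = DR"
  unfolding DR_def
proof (rule measure_eqI_countable)
  fix i :: nat
  have "emeasure (distr M (count_space UNIV) (LR j)) {i} = emeasure M {w\<in>space M. LR j w = i}"
    by (subst emeasure_distr) (auto intro!: arg_cong[where f="emeasure M"])
  also have "\<dots> = ennreal (r i)" using LR_dist assms by (simp add: emeasure_eq_measure)
  also have "\<dots> = emeasure M {w\<in>space M. LR 1 w = i}" using LR_dist by (simp add: emeasure_eq_measure)
  also have "\<dots> = emeasure (distr M (count_space UNIV) (LR 1)) {i}"
    by (subst emeasure_distr) (auto intro!: arg_cong[where f="emeasure M"])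
  finally show "emeasure (distr M (count_space UNIV) (LR j)) {i} = emeasure (distr M (count_space UNIV) (LR 1)) {i}" .
qed auto

lemma distr_LS: assumes "j \<ge> 1" shows "distr M (count_space UNIV) (LS j) = DS"
  unfolding DS_def
proof (rule measure_eqI_countable)
  fix i :: nat
  have "emeasure (distr M (count_space UNIV) (LS j)) {i} = emeasure M {w\<in>space M. LS j w = i}"
    by (subst emeasure_distr) (auto intro!: arg_cong[where f="emeasure M"])
  also have "\<dots> = ennreal (s i)" using LS_dist assms by (simp add: emeasure_eq_measure)
  also have "\<dots> = emeasure M {w\<in>space M. LS 1 w = i}" using LS_dist by (simp add: emeasure_eq_measure)
  also have "\<dots> = emeasure (distr M (count_space UNIV) (LS 1)) {i}"
    by (subst emeasure_distr) (auto intro!: arg_cong[where f="emeasure M"])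
  finally show "emeasure (distr M (count_space UNIV) (LS j)) {i} = emeasure (distr M (count_space UNIV) (LS 1)) {i}" .
qed auto

lemma next_gen:
  fixes Phi :: "nat \<Rightarrow> 'u \<times> (nat \<Rightarrow> nat option) \<times> (nat \<Rightarrow> nat option) \<Rightarrow> nat \<Rightarrow> real"
    and Y :: "nat \<Rightarrow> 'a \<Rightarrow> nat" and Rk :: "'a \<Rightarrow> nat"
  assumes Rk: "\<And>w. Rk w \<le> k"
    and sets: "\<And>j. j \<le> k \<Longrightarrow> {w\<in>space M. Rk w = j \<and> P w} = V j (k-j) -` A j \<inter> space M"
    and Asets: "\<And>j. j \<le> k \<Longrightarrow> A j \<in> sets Tm"
    and ind: "\<And>j A' Cs. j \<le> k \<Longrightarrow> A' \<in> sets Tm \<Longrightarrow>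
       prob {w\<in>space M. V j (k-j) w \<in> A' \<and> Y j w \<in> Cs} = prob {w\<in>space M. V j (k-j) w \<in> A'} * prob {w\<in>space M. Y j w \<in> Cs}"
    and Ym: "\<And>j. Y j \<in> measurable M (count_space UNIV)"
    and D: "\<And>j. j \<le> k \<Longrightarrow> distr M (count_space UNIV) (Y j) = D"
    and Phim: "\<And>j. (\<lambda>z. Phi j (fst z) (snd z)) \<in> borel_measurable (Tm \<Otimes>\<^sub>M count_space UNIV)"
    and Phib: "\<And>j v i. \<bar>Phi j v i\<bar> \<le> B"
  shows "expectation (\<lambda>w. if P w then Phi (Rk w) (V (Rk w) (k - Rk w) w) (Y (Rk w) w) else 0)
       = expectation (\<lambda>w. if P w then (\<integral>i. Phi (Rk w) (V (Rk w) (k - Rk w) w) i \<partial>D) else 0)"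
proof -
  have ind_w: "indicator (A j) (V j (k-j) w) = (if Rk w = j \<and> P w then 1 else 0 :: real)"
    if "j \<le> k" "w \<in> space M" for j w
  proof -
    have "(V j (k-j) w \<in> A j) = (w \<in> V j (k-j) -` A j \<inter> space M)" using that by auto
    also have "\<dots> = (Rk w = j \<and> P w)" unfolding sets[OF that(1), symmetric] using that by auto
    finally show ?thesis by (simp add: indicator_def)
  qed
  have decomp: "(if P w then G (Rk w) else 0) = (\<Sum>j\<in>{..k}. indicator (A j) (V j (k-j) w) * G j)"
    if "w \<in> space M" for w and G :: "nat \<Rightarrow> real"
  proof -
    have "(\<Sum>j\<in>{..k}. indicator (A j) (V j (k-j) w) * G j) = (\<Sum>j\<in>{..k}. if j = Rk w then (if P w then G j else 0) else 0)"
      by (intro sum.cong refl) (use that in \<open>auto simp: ind_w\<close>)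
    also have "\<dots> = (if P w then G (Rk w) else 0)"
      using Rk[of w] by (simp add: sum.delta')
    finally show ?thesis by simp
  qed
  have Dprob: "prob_space D" using D[of 0] prob_space_distr[OF Ym[of 0]] by simp
  have sD: "sets D = sets (count_space UNIV)" using D[of 0] sets_distr[of M "count_space UNIV" "Y 0"] by simp
  interpret PD: prob_space D by (rule Dprob)
  have F_m: "(\<lambda>z. indicator (A j) (fst z) * Phi j (fst z) (snd z)) \<in> borel_measurable (Tm \<Otimes>\<^sub>M count_space UNIV)"
    if "j \<le> k" for j
    using Phim[of j] Asets[OF that] by measurable
  have Vm: "V j (k-j) \<in> measurable M Tm" for j by (rule V_meas)
  have term_eq: "expectation (\<lambda>w. indicator (A j) (V j (k-j) w) * Phi j (V j (k-j) w) (Y j w))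
      = expectation (\<lambda>w. indicator (A j) (V j (k-j) w) * (\<integral>i. Phi j (V j (k-j) w) i \<partial>D))" if j: "j \<le> k" for j
  proof -
    have "expectation (\<lambda>w. indicator (A j) (V j (k-j) w) * Phi j (V j (k-j) w) (Y j w))
       = expectation (\<lambda>w. (\<lambda>z. indicator (A j) (fst z) * Phi j (fst z) (snd z)) (V j (k-j) w, Y j w))" by simp
    also have "\<dots> = expectation (\<lambda>w. \<integral>i. (\<lambda>z. indicator (A j) (fst z) * Phi j (fst z) (snd z)) (V j (k-j) w, i) \<partial>distr M (count_space UNIV) (Y j))"
    proof (rule indep_integral[OF Vm Ym _ F_m[OF j]])
      fix A' and Cs :: "nat set" assume "A' \<in> sets Tm" "Cs \<in> sets (count_space UNIV)"
      then show "prob {w\<in>space M. V j (k-j) w \<in> A' \<and> Y j w \<in> Cs} = prob {w\<in>space M. V j (k-j) w \<in> A'} * prob {w\<in>space M. Y j w \<in> Cs}"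
        using ind[OF j] by blast
    next
      fix z show "\<bar>indicator (A j) (fst z) * Phi j (fst z) (snd z)\<bar> \<le> \<bar>B\<bar>"
        using Phib[of j "fst z" "snd z"] by (auto simp: indicator_def abs_mult)
    qed
    also have "\<dots> = expectation (\<lambda>w. indicator (A j) (V j (k-j) w) * (\<integral>i. Phi j (V j (k-j) w) i \<partial>D))"
      by (simp add: D[OF j])
    finally show ?thesis .
  qed
  have int1: "integrable M (\<lambda>w. indicator (A j) (V j (k-j) w) * Phi j (V j (k-j) w) (Y j w))" if "j \<le> k" for j
  proof (rule integrable_const_bound[where B="\<bar>B\<bar>"])
    show "AE x in M. norm (indicator (A j) (V j (k-j) x) * Phi j (V j (k-j) x) (Y j x)) \<le> \<bar>B\<bar>"
    proof (rule AE_I2)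
      fix x
      have "\<bar>Phi j (V j (k-j) x) (Y j x)\<bar> \<le> \<bar>B\<bar>" using Phib[of j "V j (k-j) x" "Y j x"] by linarith
      then show "norm (indicator (A j) (V j (k-j) x) * Phi j (V j (k-j) x) (Y j x)) \<le> \<bar>B\<bar>"
        by (cases "V j (k-j) x \<in> A j") auto
    qed
    have "(\<lambda>w. (V j (k-j) w, Y j w)) \<in> measurable M (Tm \<Otimes>\<^sub>M count_space UNIV)"
      by (intro measurable_Pair Vm Ym)
    from measurable_compose[OF this F_m[OF that]]
    show "(\<lambda>w. indicator (A j) (V j (k-j) w) * Phi j (V j (k-j) w) (Y j w)) \<in> borel_measurable M" by simp
  qed
  have intD: "\<bar>\<integral>i. Phi j v i \<partial>D\<bar> \<le> \<bar>B\<bar>" for j v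
  proof -
    have m: "(\<lambda>i. Phi j v i) \<in> borel_measurable D"
      unfolding measurable_cong_sets[OF sD refl] by (rule borel_measurable_count_space)
    have b: "\<bar>Phi j v i\<bar> \<le> \<bar>B\<bar>" for i using Phib[of j v i] by simp
    then show ?thesis using PD.abs_integral_le[OF m] by blast
  qed
  have int2: "integrable M (\<lambda>w. indicator (A j) (V j (k-j) w) * (\<integral>i. Phi j (V j (k-j) w) i \<partial>D))" if "j \<le> k" for j
  proof (rule integrable_const_bound[where B="\<bar>B\<bar>"])
    show "AE x in M. norm (indicator (A j) (V j (k-j) x) * (\<integral>i. Phi j (V j (k-j) x) i \<partial>D)) \<le> \<bar>B\<bar>"
    proof (rule AE_I2)
      fix x
      show "norm (indicator (A j) (V j (k-j) x) * (\<integral>i. Phi j (V j (k-j) x) i \<partial>D)) \<le> \<bar>B\<bar>"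
        using intD[of j "V j (k-j) x"] by (cases "V j (k-j) x \<in> A j") auto
    qed
    have "(\<lambda>v. \<integral>i. Phi j v i \<partial>D) \<in> borel_measurable Tm"
    proof (rule PD.borel_measurable_lebesgue_integral)
      show "(\<lambda>(x, y). Phi j x y) \<in> borel_measurable (Tm \<Otimes>\<^sub>M D)"
        unfolding measurable_cong_sets[OF sets_pair_measure_cong[OF refl sD] refl]
        using Phim[of j] by (simp add: split_beta')
    qed
    then show "(\<lambda>w. indicator (A j) (V j (k-j) w) * (\<integral>i. Phi j (V j (k-j) w) i \<partial>D)) \<in> borel_measurable M"
      using Asets[OF that] by measurable
  qed
  have "expectation (\<lambda>w. if P w then Phi (Rk w) (V (Rk w) (k - Rk w) w) (Y (Rk w) w) else 0)
      = expectation (\<lambda>w. \<Sum>j\<in>{..k}. indicator (A j) (V j (k-j) w) * Phi j (V j (k-j) w) (Y j w))"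
  proof (rule Bochner_Integration.integral_cong[OF refl])
    fix x assume "x \<in> space M"
    from decomp[OF this, of "\<lambda>j. Phi j (V j (k-j) x) (Y j x)"]
    show "(if P x then Phi (Rk x) (V (Rk x) (k - Rk x) x) (Y (Rk x) x) else 0) = (\<Sum>j\<in>{..k}. indicator (A j) (V j (k-j) x) * Phi j (V j (k-j) x) (Y j x))" by simp
  qed
  also have "\<dots> = (\<Sum>j\<in>{..k}. expectation (\<lambda>w. indicator (A j) (V j (k-j) w) * Phi j (V j (k-j) w) (Y j w)))"
    by (rule Bochner_Integration.integral_sum) (use int1 in auto)
  also have "\<dots> = (\<Sum>j\<in>{..k}. expectation (\<lambda>w. indicator (A j) (V j (k-j) w) * (\<integral>i. Phi j (V j (k-j) w) i \<partial>D)))"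
    by (intro sum.cong refl term_eq) auto
  also have "\<dots> = expectation (\<lambda>w. \<Sum>j\<in>{..k}. indicator (A j) (V j (k-j) w) * (\<integral>i. Phi j (V j (k-j) w) i \<partial>D))"
    by (rule Bochner_Integration.integral_sum[symmetric]) (use int2 in auto)
  also have "\<dots> = expectation (\<lambda>w. if P w then (\<integral>i. Phi (Rk w) (V (Rk w) (k - Rk w) w) i \<partial>D) else 0)"
  proof (rule Bochner_Integration.integral_cong[OF refl])
    fix x assume "x \<in> space M"
    from decomp[OF this, of "\<lambda>j. \<integral>i. Phi j (V j (k-j) x) i \<partial>D"]
    show "(\<Sum>j\<in>{..k}. indicator (A j) (V j (k-j) x) * (\<integral>i. Phi j (V j (k-j) x) i \<partial>D)) = (if P x then (\<integral>i. Phi (Rk x) (V (Rk x) (k - Rk x) x) i \<partial>D) else 0)" by simp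
  qed
  finally show ?thesis .
qed

end

lemma Ncnt_sum: "real (Ncnt L m i w) = (\<Sum>p\<in>{1..m}. if L p w = i then 1 else 0)"
proof -
  have "real (Ncnt L m i w) = real (card {p\<in>{1..m}. L p w = i})" by (simp add: Ncnt_def)
  also have "\<dots> = (\<Sum>p\<in>{p\<in>{1..m}. L p w = i}. 1::real)" by simp
  also have "\<dots> = (\<Sum>p\<in>{1..m}. if L p w = i then 1 else 0)" by (rule sum.inter_filter) simp
  finally show ?thesis .
qed

lemma matches_ab:
  "(\<Sum>i | 0 < Ncnt LR a i w. real (Ncnt LR a i w) * real (Ncnt LS b i w))
   = (\<Sum>p\<in>{1..a}. \<Sum>q\<in>{1..b}. if LR p w = LS q w then 1 else 0)"
proof -
  have setI: "{i. 0 < Ncnt LR a i w} = (\<lambda>p. LR p w) ` {1..a}"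
    by (auto simp: Ncnt_def card_gt_0_iff)
  have "(\<Sum>p\<in>{1..a}. \<Sum>q\<in>{1..b}. if LR p w = LS q w then 1 else 0)
      = (\<Sum>p\<in>{1..a}. real (Ncnt LS b (LR p w) w))"
    by (intro sum.cong refl) (auto simp: Ncnt_sum intro!: sum.cong)
  also have "\<dots> = (\<Sum>i\<in>(\<lambda>p. LR p w) ` {1..a}. \<Sum>p\<in>{p\<in>{1..a}. LR p w = i}. real (Ncnt LS b (LR p w) w))"
    by (rule sum.image_gen) simp
  also have "\<dots> = (\<Sum>i\<in>(\<lambda>p. LR p w) ` {1..a}. real (Ncnt LR a i w) * real (Ncnt LS b i w))"
  proof (intro sum.cong refl)
    fix i
    have "(\<Sum>p\<in>{p\<in>{1..a}. LR p w = i}. real (Ncnt LS b (LR p w) w)) = (\<Sum>p\<in>{p\<in>{1..a}. LR p w = i}. real (Ncnt LS b i w))"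
      by (rule sum.cong) auto
    also have "\<dots> = real (Ncnt LR a i w) * real (Ncnt LS b i w)" by (simp add: Ncnt_def)
    finally show "(\<Sum>p\<in>{p\<in>{1..a}. LR p w = i}. real (Ncnt LS b (LR p w) w)) = real (Ncnt LR a i w) * real (Ncnt LS b i w)" .
  qed
  finally show ?thesis unfolding setI by simp
qed

lemma matches_sum: "real (matches LR LS C n w) =
   (\<Sum>p\<in>{1..Rcnt C n w}. \<Sum>q\<in>{1..Scnt C n w}. if LR p w = LS q w then 1 else 0)"
  unfolding matches_def of_nat_sum of_nat_mult by (rule matches_ab)

definition "Mx LR LS (a::nat) (b::nat) w = (\<Sum>p\<in>{1..a}. \<Sum>q\<in>{1..b}. if LR p w = LS q w then 1 else (0::real))"

lemma Mx_SucR: "Mx LR LS (Suc a) b w = Mx LR LS a b w + (\<Sum>q\<in>{1..b}. if LR (Suc a) w = LS q w then 1 else 0)"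
  by (simp add: Mx_def)

lemma Mx_SucS: "Mx LR LS a (Suc b) w = Mx LR LS a b w + (\<Sum>p\<in>{1..a}. if LR p w = LS (Suc b) w then 1 else 0)"
  by (simp add: Mx_def sum.distrib)

lemma Scnt_Suc: "Scnt C (Suc k) w = Scnt C k w + (if C (Suc k) w then 0 else 1)"
  using Rcnt_le[of C k w] by (simp add: Scnt_def Rcnt_Suc)

lemma Gamma_Suc: "Gamma g L (Suc m) w = Gamma g L m w + g (L (Suc m) w)"
  by (simp add: Gamma_def)


context setting begin

lemma r_bnd: "0 \<le> r i" "r i \<le> 1"
proof -
  show "0 \<le> r i" using r_prob by auto
  have "sum r {i} \<le> suminf r"
    by (rule sum_le_suminf) (use r_prob sums_summable in auto)
  then show "r i \<le> 1" using r_prob(3) sums_unique by fastforce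
qed

lemma s_bnd: "0 \<le> s i" "s i \<le> 1"
proof -
  show "0 \<le> s i" using s_prob by auto
  have "sum s {i} \<le> suminf s"
    by (rule sum_le_suminf) (use s_prob sums_summable in auto)
  then show "s i \<le> 1" using s_prob(3) sums_unique by fastforce
qed

lemma Gamma_bnd: "0 \<le> Gamma g L m w" "Gamma g L m w \<le> m" if "\<And>i. 0 \<le> g i" "\<And>i. g i \<le> 1"
proof -
  show "0 \<le> Gamma g L m w" unfolding Gamma_def by (rule sum_nonneg) (use that in auto)
  have "Gamma g L m w \<le> (\<Sum>j=1..m. 1)" unfolding Gamma_def by (rule sum_mono) (use that in auto)
  then show "Gamma g L m w \<le> m" by simp
qed

lemma GR_bnd: "0 \<le> Gamma s L m w" "Gamma s L m w \<le> m" using Gamma_bnd[of s] s_bnd by auto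
lemma GS_bnd: "0 \<le> Gamma r L m w" "Gamma r L m w \<le> m" using Gamma_bnd[of r] r_bnd by auto

definition "oget t = (case t of Some x \<Rightarrow> x | None \<Rightarrow> (0::nat))"
definition gR :: "nat \<Rightarrow> 'u \<times> (nat \<Rightarrow> nat option) \<times> (nat \<Rightarrow> nat option) \<Rightarrow> real" where "gR j v = (\<Sum>p\<in>{1..j}. s (oget (fst (snd v) p)))"
definition gS :: "nat \<Rightarrow> 'u \<times> (nat \<Rightarrow> nat option) \<times> (nat \<Rightarrow> nat option) \<Rightarrow> real" where "gS b v = (\<Sum>q\<in>{1..b}. r (oget (snd (snd v) q)))"
definition cS :: "nat \<Rightarrow> 'u \<times> (nat \<Rightarrow> nat option) \<times> (nat \<Rightarrow> nat option) \<Rightarrow> nat \<Rightarrow> real" where "cS b v i = (\<Sum>q\<in>{1..b}. if snd (snd v) q = Some i then 1 else (0::real))"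
definition cR :: "nat \<Rightarrow> 'u \<times> (nat \<Rightarrow> nat option) \<times> (nat \<Rightarrow> nat option) \<Rightarrow> nat \<Rightarrow> real" where "cR j v i = (\<Sum>p\<in>{1..j}. if fst (snd v) p = Some i then 1 else (0::real))"

lemma gR_V: "gR j (V j b w) = Gamma s LR j w"
  unfolding gR_def Gamma_def V_def trunc_def oget_def by (intro sum.cong) auto
lemma gS_V: "gS b (V j b w) = Gamma r LS b w"
  unfolding gS_def Gamma_def V_def trunc_def oget_def by (intro sum.cong) auto
lemma cS_V: "cS b (V j b w) i = (\<Sum>q\<in>{1..b}. if i = LS q w then 1 else 0)"
  unfolding cS_def V_def trunc_def by (intro sum.cong) auto
lemma cR_V: "cR j (V j b w) i = (\<Sum>p\<in>{1..j}. if LR p w = i then 1 else 0)"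
  unfolding cR_def V_def trunc_def by (intro sum.cong) auto

lemma Tm_c1[measurable]: "(\<lambda>v. fst (snd v) i) \<in> measurable Tm (count_space UNIV)" by (rule Tm_comp1)
lemma Tm_c2[measurable]: "(\<lambda>v. snd (snd v) i) \<in> measurable Tm (count_space UNIV)" by (rule Tm_comp2)

lemma gR_m[measurable]: "gR j \<in> borel_measurable Tm" unfolding gR_def by measurable
lemma gS_m[measurable]: "gS j \<in> borel_measurable Tm" unfolding gS_def by measurable
lemma cS_m: "(\<lambda>z. cS b (fst z) (snd z)) \<in> borel_measurable (Tm \<Otimes>\<^sub>M count_space UNIV)"
  unfolding cS_def by measurable
lemma cR_m: "(\<lambda>z. cR b (fst z) (snd z)) \<in> borel_measurable (Tm \<Otimes>\<^sub>M count_space UNIV)"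
  unfolding cR_def by measurable

lemma gR_bnd: "0 \<le> gR j v" "gR j v \<le> j"
proof -
  show "0 \<le> gR j v" unfolding gR_def by (rule sum_nonneg) (use s_bnd in auto)
  have "gR j v \<le> (\<Sum>p\<in>{1..j}. 1)" unfolding gR_def by (rule sum_mono) (use s_bnd in auto)
  then show "gR j v \<le> j" using card_atLeastAtMost[of 1 j] by simp
qed
lemma gS_bnd: "0 \<le> gS j v" "gS j v \<le> j"
proof -
  show "0 \<le> gS j v" unfolding gS_def by (rule sum_nonneg) (use r_bnd in auto)
  have "gS j v \<le> (\<Sum>p\<in>{1..j}. 1)" unfolding gS_def by (rule sum_mono) (use r_bnd in auto)
  then show "gS j v \<le> j" using card_atLeastAtMost[of 1 j] by simp
qed
lemma cS_bnd: "0 \<le> cS j v i" "cS j v i \<le> j"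
proof -
  show "0 \<le> cS j v i" unfolding cS_def by (rule sum_nonneg) auto
  have "cS j v i \<le> (\<Sum>p\<in>{1..j}. 1)" unfolding cS_def by (rule sum_mono) auto
  then show "cS j v i \<le> j" using card_atLeastAtMost[of 1 j] by simp
qed
lemma cR_bnd: "0 \<le> cR j v i" "cR j v i \<le> j"
proof -
  show "0 \<le> cR j v i" unfolding cR_def by (rule sum_nonneg) auto
  have "cR j v i \<le> (\<Sum>p\<in>{1..j}. 1)" unfolding cR_def by (rule sum_mono) auto
  then show "cR j v i \<le> j" using card_atLeastAtMost[of 1 j] by simp
qed

lemma DR_prob: "prob_space DR" unfolding DR_def by (rule prob_space_distr) simp
lemma DS_prob: "prob_space DS" unfolding DS_def by (rule prob_space_distr) simp
lemma sets_DR[simp]: "sets DR = sets (count_space UNIV)" unfolding DR_def by simp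
lemma sets_DS[simp]: "sets DS = sets (count_space UNIV)" unfolding DS_def by simp
lemma space_DR[simp]: "space DR = UNIV" unfolding DR_def by simp
lemma space_DS[simp]: "space DS = UNIV" unfolding DS_def by simp

lemma int_DR: "integrable DR f" if "\<And>i. \<bar>f i\<bar> \<le> B" for f :: "nat \<Rightarrow> real"
proof -
  interpret P: prob_space DR by (rule DR_prob)
  show ?thesis by (rule P.integrable_const_bound[where B=B])
    (use that in \<open>auto simp: measurable_cong_sets[OF sets_DR refl]\<close>)
qed
lemma int_DS: "integrable DS f" if "\<And>i. \<bar>f i\<bar> \<le> B" for f :: "nat \<Rightarrow> real"
proof -
  interpret P: prob_space DS by (rule DS_prob)
  show ?thesis by (rule P.integrable_const_bound[where B=B])
    (use that in \<open>auto simp: measurable_cong_sets[OF sets_DS refl]\<close>)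
qed

lemma DR_point: "(\<integral>i. (if c = Some i then 1 else 0) \<partial>DR) = r (oget c)"
proof (cases c)
  case None then show ?thesis using r_prob by (simp add: oget_def)
next
  case (Some x)
  have "(\<lambda>i. if c = Some i then 1 else 0::real) = indicator {x}" using Some by (auto simp: indicator_def)
  then have "(\<integral>i. (if c = Some i then 1 else 0) \<partial>DR) = measure DR {x}" by simp
  also have "\<dots> = prob {w\<in>space M. LR 1 w = x}" unfolding DR_def
    by (subst measure_distr) (auto intro!: arg_cong[where f=prob])
  also have "\<dots> = r x" using LR_dist by auto
  finally show ?thesis using Some by (simp add: oget_def)
qed

lemma DS_point: "(\<integral>i. (if c = Some i then 1 else 0) \<partial>DS) = s (oget c)"
proof (cases c)
  case None then show ?thesis using s_prob by (simp add: oget_def)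
next
  case (Some x)
  have "(\<lambda>i. if c = Some i then 1 else 0::real) = indicator {x}" using Some by (auto simp: indicator_def)
  then have "(\<integral>i. (if c = Some i then 1 else 0) \<partial>DS) = measure DS {x}" by simp
  also have "\<dots> = prob {w\<in>space M. LS 1 w = x}" unfolding DS_def
    by (subst measure_distr) (auto intro!: arg_cong[where f=prob])
  also have "\<dots> = s x" using LS_dist by auto
  finally show ?thesis using Some by (simp add: oget_def)
qed

lemma int_cS: "(\<integral>i. cS b v i \<partial>DR) = gS b v"
proof -
  have "(\<integral>i. cS b v i \<partial>DR) = (\<Sum>q\<in>{1..b}. \<integral>i. (if snd (snd v) q = Some i then 1 else 0) \<partial>DR)"
    unfolding cS_def by (rule Bochner_Integration.integral_sum) (rule int_DR[where B=1], simp)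
  also have "\<dots> = gS b v" unfolding gS_def by (simp add: DR_point)
  finally show ?thesis .
qed

lemma int_cR: "(\<integral>i. cR j v i \<partial>DS) = gR j v"
proof -
  have "(\<integral>i. cR j v i \<partial>DS) = (\<Sum>q\<in>{1..j}. \<integral>i. (if fst (snd v) q = Some i then 1 else 0) \<partial>DS)"
    unfolding cR_def by (rule Bochner_Integration.integral_sum) (rule int_DS[where B=1], simp)
  also have "\<dots> = gR j v" unfolding gR_def by (simp add: DS_point)
  finally show ?thesis .
qed

definition "muR = (\<integral>i. s i \<partial>DR)"
definition "muS = (\<integral>i. r i \<partial>DS)"
definition "e2R = (\<integral>i. (s i)^2 \<partial>DR)"
definition "e2S = (\<integral>i. (r i)^2 \<partial>DS)"

lemma intR_s: "integrable DR s" by (rule int_DR[where B=1]) (use s_bnd in auto)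
lemma intR_s2: "integrable DR (\<lambda>i. (s i)^2)" by (rule int_DR[where B=1]) (use s_bnd in \<open>auto simp: abs_le_iff power_le_one\<close>)
lemma intS_r: "integrable DS r" by (rule int_DS[where B=1]) (use r_bnd in auto)
lemma intS_r2: "integrable DS (\<lambda>i. (r i)^2)" by (rule int_DS[where B=1]) (use r_bnd in \<open>auto simp: abs_le_iff power_le_one\<close>)

lemma int_lin_R: "(\<integral>i. c1 * s i + c2 * (s i)^2 + c3 \<partial>DR) = c1 * muR + c2 * e2R + c3"
proof -
  interpret P: prob_space DR by (rule DR_prob)
  have "(\<integral>i. c1 * s i + c2 * (s i)^2 + c3 \<partial>DR) = (\<integral>i. c1 * s i + c2 * (s i)^2 \<partial>DR) + (\<integral>i. c3 \<partial>DR)"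
    by (rule Bochner_Integration.integral_add) (use intR_s intR_s2 in auto)
  also have "(\<integral>i. c1 * s i + c2 * (s i)^2 \<partial>DR) = (\<integral>i. c1 * s i \<partial>DR) + (\<integral>i. c2 * (s i)^2 \<partial>DR)"
    by (rule Bochner_Integration.integral_add) (use intR_s intR_s2 in auto)
  moreover have "P.prob UNIV = 1" using P.prob_space by simp
  ultimately show ?thesis by (simp add: muR_def e2R_def)
qed

lemma int_lin_S: "(\<integral>i. c1 * r i + c2 * (r i)^2 + c3 \<partial>DS) = c1 * muS + c2 * e2S + c3"
proof -
  interpret P: prob_space DS by (rule DS_prob)
  have "(\<integral>i. c1 * r i + c2 * (r i)^2 + c3 \<partial>DS) = (\<integral>i. c1 * r i + c2 * (r i)^2 \<partial>DS) + (\<integral>i. c3 \<partial>DS)"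
    by (rule Bochner_Integration.integral_add) (use intS_r intS_r2 in auto)
  also have "(\<integral>i. c1 * r i + c2 * (r i)^2 \<partial>DS) = (\<integral>i. c1 * r i \<partial>DS) + (\<integral>i. c2 * (r i)^2 \<partial>DS)"
    by (rule Bochner_Integration.integral_add) (use intS_r intS_r2 in auto)
  moreover have "P.prob UNIV = 1" using P.prob_space by simp
  ultimately show ?thesis by (simp add: muS_def e2S_def)
qed

end

context policy begin

lemma next_R:
  assumes Phim: "\<And>j. (\<lambda>z. Phi j (fst z) (snd z)) \<in> borel_measurable (Tm \<Otimes>\<^sub>M count_space UNIV)"
    and Phib: "\<And>j v i. \<bar>Phi j v i\<bar> \<le> (B::real)"
  shows "expectation (\<lambda>w. if C (Suc k) w then Phi (Rcnt C k w) (V (Rcnt C k w) (k - Rcnt C k w) w) (LR (Suc (Rcnt C k w)) w) else 0)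
       = expectation (\<lambda>w. if C (Suc k) w then (\<integral>i. Phi (Rcnt C k w) (V (Rcnt C k w) (k - Rcnt C k w) w) i \<partial>DR) else 0)"
proof -
  define A where "A j = (SOME A. A \<in> sets Tm \<and> {w\<in>space M. Rcnt C k w = j \<and> C (Suc k) w} = V j (k-j) -` A \<inter> space M)" for j
  have A: "A j \<in> sets Tm \<and> {w\<in>space M. Rcnt C k w = j \<and> C (Suc k) w} = V j (k-j) -` A j \<inter> space M" if "j \<le> k" for j
    unfolding A_def by (rule someI_ex) (use RCset[OF that] in blast)
  show ?thesis
  proof (rule next_gen[where A=A and Y="\<lambda>j. LR (Suc j)" and P="C (Suc k)" and Rk="Rcnt C k" and Phi=Phi and D=DR and k=k and B=B])
    show "\<And>w. Rcnt C k w \<le> k" by (rule Rcnt_le)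
    show "\<And>j. j \<le> k \<Longrightarrow> {w \<in> space M. Rcnt C k w = j \<and> C (Suc k) w} = V j (k - j) -` A j \<inter> space M" using A by blast
    show "\<And>j. j \<le> k \<Longrightarrow> A j \<in> sets Tm" using A by blast
  next
    fix j A' and Cs :: "nat set" assume "j \<le> k" "A' \<in> sets Tm"
    have "Inl (Suc j) \<in> ({1..} <+> {1..})" "Inl (Suc j) \<notin> KK j (k-j)" by (auto simp: KK_def)
    from indep_lab[OF this \<open>A' \<in> sets Tm\<close>, of Cs]
    show "prob {w \<in> space M. V j (k - j) w \<in> A' \<and> LR (Suc j) w \<in> Cs} = prob {w \<in> space M. V j (k - j) w \<in> A'} * prob {w \<in> space M. LR (Suc j) w \<in> Cs}"
      by (simp add: Lab_def)
  next
    show "\<And>j. LR (Suc j) \<in> measurable M (count_space UNIV)" by simp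
    show "\<And>j. j \<le> k \<Longrightarrow> distr M (count_space UNIV) (LR (Suc j)) = DR" by (rule distr_LR) simp
  qed (use Phim Phib in auto)
qed

lemma next_S:
  assumes Phim: "\<And>j. (\<lambda>z. Phi j (fst z) (snd z)) \<in> borel_measurable (Tm \<Otimes>\<^sub>M count_space UNIV)"
    and Phib: "\<And>j v i. \<bar>Phi j v i\<bar> \<le> (B::real)"
  shows "expectation (\<lambda>w. if \<not> C (Suc k) w then Phi (Rcnt C k w) (V (Rcnt C k w) (k - Rcnt C k w) w) (LS (Suc (k - Rcnt C k w)) w) else 0)
       = expectation (\<lambda>w. if \<not> C (Suc k) w then (\<integral>i. Phi (Rcnt C k w) (V (Rcnt C k w) (k - Rcnt C k w) w) i \<partial>DS) else 0)"
proof -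
  define A where "A j = (SOME A. A \<in> sets Tm \<and> {w\<in>space M. Rcnt C k w = j \<and> \<not> C (Suc k) w} = V j (k-j) -` A \<inter> space M)" for j
  have ex: "\<exists>A. A \<in> sets Tm \<and> {w\<in>space M. Rcnt C k w = j \<and> \<not> C (Suc k) w} = V j (k-j) -` A \<inter> space M" if jk: "j \<le> k" for j
  proof -
    obtain A1 where A1: "A1 \<in> sets Tm" "{w\<in>space M. Rcnt C k w = j} = V j (k-j) -` A1 \<inter> space M"
      using Rset[OF jk] by blast
    obtain A2 where A2: "A2 \<in> sets Tm" "{w\<in>space M. Rcnt C k w = j \<and> C (Suc k) w} = V j (k-j) -` A2 \<inter> space M"
      using RCset[OF jk] by blast
    have "{w\<in>space M. Rcnt C k w = j \<and> \<not> C (Suc k) w} = {w\<in>space M. Rcnt C k w = j} - {w\<in>space M. Rcnt C k w = j \<and> C (Suc k) w}"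
      by auto
    also have "\<dots> = V j (k-j) -` (A1 - A2) \<inter> space M" unfolding A1(2) A2(2) by auto
    finally show ?thesis using A1(1) A2(1) by blast
  qed
  have A: "A j \<in> sets Tm \<and> {w\<in>space M. Rcnt C k w = j \<and> \<not> C (Suc k) w} = V j (k-j) -` A j \<inter> space M" if "j \<le> k" for j
    unfolding A_def by (rule someI_ex) (rule ex[OF that])
  show ?thesis
  proof (rule next_gen[where A=A and Y="\<lambda>j. LS (Suc (k - j))" and P="\<lambda>w. \<not> C (Suc k) w" and Rk="Rcnt C k" and Phi=Phi and D=DS and k=k and B=B])
    show "\<And>w. Rcnt C k w \<le> k" by (rule Rcnt_le)
    show "\<And>j. j \<le> k \<Longrightarrow> {w \<in> space M. Rcnt C k w = j \<and> \<not> C (Suc k) w} = V j (k - j) -` A j \<inter> space M" using A by blast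
    show "\<And>j. j \<le> k \<Longrightarrow> A j \<in> sets Tm" using A by blast
  next
    fix j A' and Cs :: "nat set" assume "j \<le> k" "A' \<in> sets Tm"
    have "Inr (Suc (k-j)) \<in> ({1..} <+> {1..})" "Inr (Suc (k-j)) \<notin> KK j (k-j)" by (auto simp: KK_def)
    from indep_lab[OF this \<open>A' \<in> sets Tm\<close>, of Cs]
    show "prob {w \<in> space M. V j (k - j) w \<in> A' \<and> LS (Suc (k-j)) w \<in> Cs} = prob {w \<in> space M. V j (k - j) w \<in> A'} * prob {w \<in> space M. LS (Suc (k-j)) w \<in> Cs}"
      by (simp add: Lab_def)
  next
    show "\<And>j. LS (Suc (k-j)) \<in> measurable M (count_space UNIV)" by simp
    show "\<And>j. j \<le> k \<Longrightarrow> distr M (count_space UNIV) (LS (Suc (k-j))) = DS" by (rule distr_LS) simp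
  qed (use Phim Phib in auto)
qed

end

lemma (in prob_space) bint:
  fixes f :: "'a \<Rightarrow> real"
  assumes "f \<in> borel_measurable M" "\<And>w. w \<in> space M \<Longrightarrow> \<bar>f w\<bar> \<le> B"
  shows "integrable M f"
  by (rule integrable_const_bound[where B=B]) (use assms in \<open>auto intro!: AE_I2\<close>)

lemma (in prob_space) add3:
  fixes F G H :: "'a \<Rightarrow> real"
  assumes "integrable M F" "integrable M G" "integrable M H"
  shows "expectation (\<lambda>w. F w + G w + H w) = expectation F + expectation G + expectation H"
  using assms by simp

context policy begin

definition "aa k w = Gamma s LR (Rcnt C k w) w"
definition "bb k w = Gamma r LS (Scnt C k w) w"
definition "MM k w = Mx LR LS (Rcnt C k w) (Scnt C k w) w"
definition "pC k = expectation (\<lambda>w. if C (Suc k) w then 1 else (0::real))"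

lemma Gm[measurable]: "(\<lambda>w. Gamma g L m w) \<in> borel_measurable M" if [measurable]: "\<And>j. L j \<in> measurable M (count_space UNIV)" for g L
  unfolding Gamma_def by measurable
lemma aa_m[measurable]: "(\<lambda>w. aa k w) \<in> borel_measurable M" unfolding aa_def by measurable
lemma bb_m[measurable]: "(\<lambda>w. bb k w) \<in> borel_measurable M" unfolding bb_def Scnt_def by measurable
lemma MM_m[measurable]: "(\<lambda>w. MM k w) \<in> borel_measurable M" unfolding MM_def Mx_def Scnt_def by measurable

lemma aa_bnd: "0 \<le> aa k w" "aa k w \<le> k"
  unfolding aa_def using GR_bnd[of LR "Rcnt C k w" w] Rcnt_le[of C k w] by auto
lemma bb_bnd: "0 \<le> bb k w" "bb k w \<le> k"
  unfolding bb_def Scnt_def using GS_bnd[of LS "k - Rcnt C k w" w] by auto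
lemma MM_bnd: "0 \<le> MM k w" "MM k w \<le> k * k"
proof -
  show "0 \<le> MM k w" unfolding MM_def Mx_def by (intro sum_nonneg) auto
  have "MM k w \<le> (\<Sum>p\<in>{1..Rcnt C k w}. \<Sum>q\<in>{1..Scnt C k w}. 1)"
    unfolding MM_def Mx_def by (intro sum_mono) auto
  also have "\<dots> = real (Rcnt C k w) * real (Scnt C k w)" by simp
  also have "\<dots> \<le> real k * real k"
    using Rcnt_le[of C k w] by (intro mult_mono) (auto simp: Scnt_def)
  finally show "MM k w \<le> k * k" by simp
qed

lemma pC_bnd: "0 \<le> pC k" "pC k \<le> 1"
proof -
  have i: "integrable M (\<lambda>w. if C (Suc k) w then 1 else 0::real)" by (rule bint[where B=1]) auto
  show "0 \<le> pC k" unfolding pC_def by (rule Bochner_Integration.integral_nonneg) auto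
  show "pC k \<le> 1" unfolding pC_def by (rule integral_le_const[OF i]) auto
qed

lemma ifC: "expectation (\<lambda>w. if C (Suc k) w then c else 0) = c * pC k"
proof -
  have "expectation (\<lambda>w. if C (Suc k) w then c else 0) = expectation (\<lambda>w. c * (if C (Suc k) w then 1 else 0))"
    by (rule Bochner_Integration.integral_cong) auto
  then show ?thesis by (simp add: pC_def)
qed

lemma ifnC: "expectation (\<lambda>w. if \<not> C (Suc k) w then c else 0) = c * (1 - pC k)"
proof -
  have i: "integrable M (\<lambda>w. if C (Suc k) w then c else 0::real)" by (rule bint[where B="\<bar>c\<bar>"]) auto
  have "expectation (\<lambda>w. if \<not> C (Suc k) w then c else 0) = expectation (\<lambda>w. c - (if C (Suc k) w then c else 0))"
    by (rule Bochner_Integration.integral_cong) auto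
  also have "\<dots> = c - c * pC k" using i by (simp add: ifC prob_space)
  finally show ?thesis by (simp add: algebra_simps)
qed

lemma aa_Suc: "aa (Suc k) w = aa k w + (if C (Suc k) w then s (LR (Suc (Rcnt C k w)) w) else 0)"
  by (simp add: aa_def Rcnt_Suc Gamma_Suc)
lemma bb_Suc: "bb (Suc k) w = bb k w + (if \<not> C (Suc k) w then r (LS (Suc (k - Rcnt C k w)) w) else 0)"
proof -
  have S: "Scnt C k w = k - Rcnt C k w" by (simp add: Scnt_def)
  show ?thesis unfolding bb_def Scnt_Suc by (cases "C (Suc k) w") (simp_all add: Gamma_Suc S)
qed

lemma MM_Suc: "MM (Suc k) w = MM k w
   + (if C (Suc k) w then cS (k - Rcnt C k w) (V (Rcnt C k w) (k - Rcnt C k w) w) (LR (Suc (Rcnt C k w)) w) else 0)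
   + (if \<not> C (Suc k) w then cR (Rcnt C k w) (V (Rcnt C k w) (k - Rcnt C k w) w) (LS (Suc (k - Rcnt C k w)) w) else 0)"
proof -
  have S: "Scnt C k w = k - Rcnt C k w" by (simp add: Scnt_def)
  show ?thesis
  proof (cases "C (Suc k) w")
    case True
    then show ?thesis unfolding MM_def Rcnt_Suc Scnt_Suc
      by (simp add: Mx_SucR cS_V S)
  next
    case False
    then show ?thesis unfolding MM_def Rcnt_Suc Scnt_Suc
      by (simp add: Mx_SucS cR_V S)
  qed
qed


lemma C_set: "{w\<in>space M. C (Suc k) w} \<in> sets M"
proof -
  have "C (Suc k) -` {True} \<inter> space M \<in> sets M" by (rule measurable_sets[OF C_meas[of k]]) simp
  moreover have "C (Suc k) -` {True} \<inter> space M = {w\<in>space M. C (Suc k) w}" by auto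
  ultimately show ?thesis by simp
qed

lemma nC_set: "{w\<in>space M. \<not> C (Suc k) w} \<in> sets M"
proof -
  have "{w\<in>space M. \<not> C (Suc k) w} = space M - {w\<in>space M. C (Suc k) w}" by auto
  then show ?thesis using C_set by auto
qed

lemma ifR_meas:
  assumes "\<And>j. (\<lambda>w. F j w) \<in> borel_measurable M"
  shows "(\<lambda>w. if C (Suc k) w then F (Rcnt C k w) w else (0::real)) \<in> borel_measurable M"
  by (rule measurable_If[OF measurable_compose_countable[OF assms Rcnt_meas] measurable_const C_set]) simp

lemma ifS_meas:
  assumes "\<And>j. (\<lambda>w. F j w) \<in> borel_measurable M"
  shows "(\<lambda>w. if \<not> C (Suc k) w then F (Rcnt C k w) w else (0::real)) \<in> borel_measurable M"
  by (rule measurable_If[OF measurable_compose_countable[OF assms Rcnt_meas] measurable_const nC_set]) simp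

lemma nR_meas:
  assumes Phim: "\<And>j. (\<lambda>z. Phi j (fst z) (snd z)) \<in> borel_measurable (Tm \<Otimes>\<^sub>M count_space UNIV)"
  shows "(\<lambda>w. if C (Suc k) w then Phi (Rcnt C k w) (V (Rcnt C k w) (k - Rcnt C k w) w) (LR (Suc (Rcnt C k w)) w) else (0::real)) \<in> borel_measurable M"
proof -
  have [measurable]: "(\<lambda>w. Phi j (V j (k - j) w) (LR (Suc j) w)) \<in> borel_measurable M" for j
    using measurable_compose[OF measurable_Pair[OF V_meas LR_m[of "Suc j"]] Phim[of j]] by simp
  show ?thesis by (rule ifR_meas[where F="\<lambda>j w. Phi j (V j (k - j) w) (LR (Suc j) w)"]) fact
qed

lemma nS_meas:
  assumes Phim: "\<And>j. (\<lambda>z. Phi j (fst z) (snd z)) \<in> borel_measurable (Tm \<Otimes>\<^sub>M count_space UNIV)"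
  shows "(\<lambda>w. if \<not> C (Suc k) w then Phi (Rcnt C k w) (V (Rcnt C k w) (k - Rcnt C k w) w) (LS (Suc (k - Rcnt C k w)) w) else (0::real)) \<in> borel_measurable M"
proof -
  have [measurable]: "(\<lambda>w. Phi j (V j (k - j) w) (LS (Suc (k - j)) w)) \<in> borel_measurable M" for j
    using measurable_compose[OF measurable_Pair[OF V_meas LS_m[of "Suc (k - j)"]] Phim[of j]] by simp
  show ?thesis by (rule ifS_meas[where F="\<lambda>j w. Phi j (V j (k - j) w) (LS (Suc (k - j)) w)"]) fact
qed

lemma nR_int:
  assumes Phim: "\<And>j. (\<lambda>z. Phi j (fst z) (snd z)) \<in> borel_measurable (Tm \<Otimes>\<^sub>M count_space UNIV)"
    and Phib: "\<And>j v i. \<bar>Phi j v i\<bar> \<le> (B::real)"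
  shows "integrable M (\<lambda>w. if C (Suc k) w then Phi (Rcnt C k w) (V (Rcnt C k w) (k - Rcnt C k w) w) (LR (Suc (Rcnt C k w)) w) else 0)"
proof (rule bint[OF nR_meas[OF Phim], where B="\<bar>B\<bar>"])
  have h: "\<bar>Phi j v i\<bar> \<le> \<bar>B\<bar>" for j v i using Phib[of j v i] by linarith
  fix w show "\<bar>if C (Suc k) w then Phi (Rcnt C k w) (V (Rcnt C k w) (k - Rcnt C k w) w) (LR (Suc (Rcnt C k w)) w) else 0\<bar> \<le> \<bar>B\<bar>"
    using h by simp
qed

lemma nS_int:
  assumes Phim: "\<And>j. (\<lambda>z. Phi j (fst z) (snd z)) \<in> borel_measurable (Tm \<Otimes>\<^sub>M count_space UNIV)"
    and Phib: "\<And>j v i. \<bar>Phi j v i\<bar> \<le> (B::real)"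
  shows "integrable M (\<lambda>w. if \<not> C (Suc k) w then Phi (Rcnt C k w) (V (Rcnt C k w) (k - Rcnt C k w) w) (LS (Suc (k - Rcnt C k w)) w) else 0)"
proof (rule bint[OF nS_meas[OF Phim], where B="\<bar>B\<bar>"])
  have h: "\<bar>Phi j v i\<bar> \<le> \<bar>B\<bar>" for j v i using Phib[of j v i] by linarith
  fix w show "\<bar>if \<not> C (Suc k) w then Phi (Rcnt C k w) (V (Rcnt C k w) (k - Rcnt C k w) w) (LS (Suc (k - Rcnt C k w)) w) else 0\<bar> \<le> \<bar>B\<bar>"
    using h by simp
qed

lemma aa_int: "integrable M (aa k)" by (rule bint[where B=k]) (use aa_bnd in auto)
lemma bb_int: "integrable M (bb k)" by (rule bint[where B=k]) (use bb_bnd in auto)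
lemma MM_int: "integrable M (MM k)" by (rule bint[where B="k*k"]) (use MM_bnd in auto)

lemma E_aa: "expectation (aa (Suc k)) = expectation (aa k) + muR * pC k"
proof -
  have m: "(\<lambda>z. s (snd z)) \<in> borel_measurable (Tm \<Otimes>\<^sub>M count_space UNIV)" by measurable
  have b: "\<bar>s i\<bar> \<le> 1" for i using s_bnd[of i] by simp
  have "expectation (aa (Suc k)) = expectation (\<lambda>w. aa k w + (if C (Suc k) w then s (LR (Suc (Rcnt C k w)) w) else 0))"
    by (simp add: aa_Suc[abs_def])
  also have "\<dots> = expectation (aa k) + expectation (\<lambda>w. if C (Suc k) w then s (LR (Suc (Rcnt C k w)) w) else 0)"
    by (rule Bochner_Integration.integral_add[OF aa_int nR_int[where Phi="\<lambda>j v i. s i", OF m b, simplified]])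
  also have "expectation (\<lambda>w. if C (Suc k) w then s (LR (Suc (Rcnt C k w)) w) else 0) = expectation (\<lambda>w. if C (Suc k) w then muR else 0)"
    using next_R[where Phi="\<lambda>j v i. s i", OF m b, of k] unfolding muR_def by simp
  finally show ?thesis by (simp add: ifC)
qed


lemma step3:
  fixes F F' X Y :: "'a \<Rightarrow> real"
  assumes "\<And>w. w \<in> space M \<Longrightarrow> F' w = F w + X w + Y w" "integrable M F" "integrable M X" "integrable M Y"
  shows "expectation F' = expectation F + expectation X + expectation Y"
proof -
  have "expectation F' = expectation (\<lambda>w. F w + X w + Y w)"
    by (rule Bochner_Integration.integral_cong) (use assms in auto)
  also have "\<dots> = expectation F + expectation X + expectation Y" by (rule add3) (use assms in auto)
  finally show ?thesis .
qed

lemma E_bb: "expectation (bb (Suc k)) = expectation (bb k) + muS * (1 - pC k)"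
proof -
  have m: "(\<lambda>z. r (snd z)) \<in> borel_measurable (Tm \<Otimes>\<^sub>M count_space UNIV)" by measurable
  have b: "\<bar>r i\<bar> \<le> 1" for i using r_bnd[of i] by simp
  have "expectation (bb (Suc k)) = expectation (\<lambda>w. bb k w + (if \<not> C (Suc k) w then r (LS (Suc (k - Rcnt C k w)) w) else 0))"
    by (simp add: bb_Suc[abs_def])
  also have "\<dots> = expectation (bb k) + expectation (\<lambda>w. if \<not> C (Suc k) w then r (LS (Suc (k - Rcnt C k w)) w) else 0)"
    by (rule Bochner_Integration.integral_add[OF bb_int nS_int[where Phi="\<lambda>j v i. r i", OF m b, simplified]])
  also have "expectation (\<lambda>w. if \<not> C (Suc k) w then r (LS (Suc (k - Rcnt C k w)) w) else 0) = expectation (\<lambda>w. if \<not> C (Suc k) w then muS else 0)"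
    using next_S[where Phi="\<lambda>j v i. r i", OF m b, of k] unfolding muS_def by simp
  finally show ?thesis by (simp add: ifnC)
qed

lemma E_R: "expectation (\<lambda>w. real (Rcnt C (Suc k) w)) = expectation (\<lambda>w. real (Rcnt C k w)) + pC k"
proof -
  have i1: "integrable M (\<lambda>w. real (Rcnt C k w))" by (rule bint[where B=k]) (use Rcnt_le in auto)
  have i2: "integrable M (\<lambda>w. if C (Suc k) w then 1 else 0::real)" by (rule bint[where B=1]) auto
  have "expectation (\<lambda>w. real (Rcnt C (Suc k) w)) = expectation (\<lambda>w. real (Rcnt C k w) + (if C (Suc k) w then 1 else 0))"
    by (rule Bochner_Integration.integral_cong) (auto simp: Rcnt_Suc)
  also have "\<dots> = expectation (\<lambda>w. real (Rcnt C k w)) + pC k"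
    unfolding pC_def by (rule Bochner_Integration.integral_add[OF i1 i2])
  finally show ?thesis .
qed

definition "gRk k j v = (if j \<le> k then gR j v else 0)"
definition "cRk k j v i = (if j \<le> k then cR j v i else 0)"

lemma gRk_m: "(\<lambda>z. gRk k j (fst z)) \<in> borel_measurable (Tm \<Otimes>\<^sub>M count_space UNIV)"
  unfolding gRk_def by (cases "j \<le> k") simp_all
lemma cRk_m: "(\<lambda>z. cRk k j (fst z) (snd z)) \<in> borel_measurable (Tm \<Otimes>\<^sub>M count_space UNIV)"
  unfolding cRk_def by (cases "j \<le> k") (simp_all add: cR_m)
lemma gRk_bnd: "0 \<le> gRk k j v" "gRk k j v \<le> k"
  unfolding gRk_def using gR_bnd[of j v] by auto
lemma cRk_bnd: "0 \<le> cRk k j v i" "cRk k j v i \<le> k"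
  unfolding cRk_def using cR_bnd[of j v i] by auto
lemma cS_bnd': "0 \<le> cS (k - j) v i" "cS (k - j) v i \<le> k"
  using cS_bnd[of "k - j" v i] by auto
lemma gS_bnd': "0 \<le> gS (k - j) v" "gS (k - j) v \<le> k"
  using gS_bnd[of "k - j" v] by auto

lemma gS_Vk: "gS (k - Rcnt C k w) (V (Rcnt C k w) (k - Rcnt C k w) w) = bb k w"
  by (simp add: gS_V bb_def Scnt_def)
lemma gRk_Vk: "gRk k (Rcnt C k w) (V (Rcnt C k w) (k - Rcnt C k w) w) = aa k w"
  using Rcnt_le[of C k w] by (simp add: gRk_def gR_V aa_def)

lemma E_MM: "expectation (MM (Suc k)) = expectation (MM k)
   + expectation (\<lambda>w. if C (Suc k) w then bb k w else 0) + expectation (\<lambda>w. if \<not> C (Suc k) w then aa k w else 0)"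
proof -
  have m1: "(\<lambda>z. cS (k - j) (fst z) (snd z)) \<in> borel_measurable (Tm \<Otimes>\<^sub>M count_space UNIV)" for j by (rule cS_m)
  have b1: "\<bar>cS (k - j) v i\<bar> \<le> k" for j v i using cS_bnd'[of k j v i] by simp
  have m2: "(\<lambda>z. cRk k j (fst z) (snd z)) \<in> borel_measurable (Tm \<Otimes>\<^sub>M count_space UNIV)" for j by (rule cRk_m)
  have b2: "\<bar>cRk k j v i\<bar> \<le> k" for j v i using cRk_bnd[of k j v i] by simp
  have "expectation (MM (Suc k)) = expectation (MM k)
    + expectation (\<lambda>w. if C (Suc k) w then cS (k - Rcnt C k w) (V (Rcnt C k w) (k - Rcnt C k w) w) (LR (Suc (Rcnt C k w)) w) else 0)
    + expectation (\<lambda>w. if \<not> C (Suc k) w then cRk k (Rcnt C k w) (V (Rcnt C k w) (k - Rcnt C k w) w) (LS (Suc (k - Rcnt C k w)) w) else 0)"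
  proof (rule step3[OF _ MM_int nR_int[where Phi="\<lambda>j. cS (k - j)", OF m1 b1] nS_int[where Phi="cRk k", OF m2 b2]])
    fix w show "MM (Suc k) w = MM k w + (if C (Suc k) w then cS (k - Rcnt C k w) (V (Rcnt C k w) (k - Rcnt C k w) w) (LR (Suc (Rcnt C k w)) w) else 0)
      + (if \<not> C (Suc k) w then cRk k (Rcnt C k w) (V (Rcnt C k w) (k - Rcnt C k w) w) (LS (Suc (k - Rcnt C k w)) w) else 0)"
      using Rcnt_le[of C k w] by (simp add: MM_Suc cRk_def)
  qed
  also have "expectation (\<lambda>w. if C (Suc k) w then cS (k - Rcnt C k w) (V (Rcnt C k w) (k - Rcnt C k w) w) (LR (Suc (Rcnt C k w)) w) else 0)
     = expectation (\<lambda>w. if C (Suc k) w then bb k w else 0)"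
    using next_R[where Phi="\<lambda>j. cS (k - j)", OF m1 b1, of k] by (simp add: int_cS gS_Vk cong: if_cong)
  also have "expectation (\<lambda>w. if \<not> C (Suc k) w then cRk k (Rcnt C k w) (V (Rcnt C k w) (k - Rcnt C k w) w) (LS (Suc (k - Rcnt C k w)) w) else 0)
     = expectation (\<lambda>w. if \<not> C (Suc k) w then aa k w else 0)"
  proof -
    have "(\<integral>i. cRk k (Rcnt C k w) v i \<partial>DS) = gRk k (Rcnt C k w) v" for w v
      using Rcnt_le[of C k w] by (simp add: cRk_def gRk_def int_cR)
    then show ?thesis
      using next_S[where Phi="cRk k", OF m2 b2, of k] by (simp add: gRk_Vk cong: if_cong)
  qed
  finally show ?thesis .
qed


lemma ifC_mult: "expectation (\<lambda>w. if C (Suc k) w then f w * (c::real) else 0) = c * expectation (\<lambda>w. if C (Suc k) w then f w else 0)"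
proof -
  have "expectation (\<lambda>w. if C (Suc k) w then f w * c else 0) = expectation (\<lambda>w. c * (if C (Suc k) w then f w else 0))"
    by (rule Bochner_Integration.integral_cong) auto
  then show ?thesis by simp
qed

lemma ifnC_mult: "expectation (\<lambda>w. if \<not> C (Suc k) w then f w * (c::real) else 0) = c * expectation (\<lambda>w. if \<not> C (Suc k) w then f w else 0)"
proof -
  have "expectation (\<lambda>w. if \<not> C (Suc k) w then f w * c else 0) = expectation (\<lambda>w. c * (if \<not> C (Suc k) w then f w else 0))"
    by (rule Bochner_Integration.integral_cong) auto
  then show ?thesis by simp
qed

lemma E_ab: "expectation (\<lambda>w. aa (Suc k) w * bb (Suc k) w) = expectation (\<lambda>w. aa k w * bb k w)
   + muR * expectation (\<lambda>w. if C (Suc k) w then bb k w else 0) + muS * expectation (\<lambda>w. if \<not> C (Suc k) w then aa k w else 0)"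
proof -
  have m1: "(\<lambda>z. gS (k - j) (fst z) * s (snd z)) \<in> borel_measurable (Tm \<Otimes>\<^sub>M count_space UNIV)" for j by measurable
  have b1: "\<bar>gS (k - j) v * s i\<bar> \<le> k" for j v i
  proof -
    have "\<bar>gS (k - j) v * s i\<bar> = gS (k - j) v * s i" using gS_bnd'[of k j v] s_bnd[of i] by simp
    also have "\<dots> \<le> real k * 1" using gS_bnd'[of k j v] s_bnd[of i] by (intro mult_mono) auto
    finally show ?thesis by simp
  qed
  have m2: "(\<lambda>z. gRk k j (fst z) * r (snd z)) \<in> borel_measurable (Tm \<Otimes>\<^sub>M count_space UNIV)" for j
    using gRk_m[of k j] by measurable
  have b2: "\<bar>gRk k j v * r i\<bar> \<le> k" for j v i
  proof -
    have "\<bar>gRk k j v * r i\<bar> = gRk k j v * r i" using gRk_bnd[of k j v] r_bnd[of i] by simp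
    also have "\<dots> \<le> real k * 1" using gRk_bnd[of k j v] r_bnd[of i] by (intro mult_mono) auto
    finally show ?thesis by simp
  qed
  have iab: "integrable M (\<lambda>w. aa k w * bb k w)"
  proof (rule bint[where B="k*k"])
    fix w show "\<bar>aa k w * bb k w\<bar> \<le> k * k"
      using aa_bnd[of k w] bb_bnd[of k w] by (simp add: abs_mult mult_mono)
  qed simp
  have "expectation (\<lambda>w. aa (Suc k) w * bb (Suc k) w) = expectation (\<lambda>w. aa k w * bb k w)
    + expectation (\<lambda>w. if C (Suc k) w then gS (k - Rcnt C k w) (V (Rcnt C k w) (k - Rcnt C k w) w) * s (LR (Suc (Rcnt C k w)) w) else 0)
    + expectation (\<lambda>w. if \<not> C (Suc k) w then gRk k (Rcnt C k w) (V (Rcnt C k w) (k - Rcnt C k w) w) * r (LS (Suc (k - Rcnt C k w)) w) else 0)"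
  proof (rule step3[OF _ iab nR_int[where Phi="\<lambda>j v i. gS (k - j) v * s i", OF m1 b1] nS_int[where Phi="\<lambda>j v i. gRk k j v * r i", OF m2 b2]])
    fix w show "aa (Suc k) w * bb (Suc k) w = aa k w * bb k w
      + (if C (Suc k) w then gS (k - Rcnt C k w) (V (Rcnt C k w) (k - Rcnt C k w) w) * s (LR (Suc (Rcnt C k w)) w) else 0)
      + (if \<not> C (Suc k) w then gRk k (Rcnt C k w) (V (Rcnt C k w) (k - Rcnt C k w) w) * r (LS (Suc (k - Rcnt C k w)) w) else 0)"
      unfolding gS_Vk gRk_Vk aa_Suc bb_Suc by (simp add: algebra_simps)
  qed
  also have "expectation (\<lambda>w. if C (Suc k) w then gS (k - Rcnt C k w) (V (Rcnt C k w) (k - Rcnt C k w) w) * s (LR (Suc (Rcnt C k w)) w) else 0)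
     = muR * expectation (\<lambda>w. if C (Suc k) w then bb k w else 0)"
    using next_R[where Phi="\<lambda>j v i. gS (k - j) v * s i", OF m1 b1, of k]
    by (simp add: gS_Vk muR_def[symmetric] ifC_mult cong: if_cong)
  also have "expectation (\<lambda>w. if \<not> C (Suc k) w then gRk k (Rcnt C k w) (V (Rcnt C k w) (k - Rcnt C k w) w) * r (LS (Suc (k - Rcnt C k w)) w) else 0)
     = muS * expectation (\<lambda>w. if \<not> C (Suc k) w then aa k w else 0)"
    using next_S[where Phi="\<lambda>j v i. gRk k j v * r i", OF m2 b2, of k]
    by (simp add: gRk_Vk muS_def[symmetric] ifnC_mult cong: if_cong)
  finally show ?thesis .
qed


lemma E_sq: "expectation (\<lambda>w. (aa (Suc k) w + bb (Suc k) w)^2) = expectation (\<lambda>w. (aa k w + bb k w)^2)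
   + expectation (\<lambda>w. if C (Suc k) w then 2 * (aa k w + bb k w) * muR + e2R else 0)
   + expectation (\<lambda>w. if \<not> C (Suc k) w then 2 * (aa k w + bb k w) * muS + e2S else 0)"
proof -
  define P1 where "P1 j v i = 2 * (gRk k j v + gS (k - j) v) * s i + 1 * (s i)^2 + 0" for j v i
  define P2 where "P2 j v i = 2 * (gRk k j v + gS (k - j) v) * r i + 1 * (r i)^2 + 0" for j v i
  have m1: "(\<lambda>z. P1 j (fst z) (snd z)) \<in> borel_measurable (Tm \<Otimes>\<^sub>M count_space UNIV)" for j
    unfolding P1_def using gRk_m[of k j] by measurable
  have m2: "(\<lambda>z. P2 j (fst z) (snd z)) \<in> borel_measurable (Tm \<Otimes>\<^sub>M count_space UNIV)" for j
    unfolding P2_def using gRk_m[of k j] by measurable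
  have b1: "\<bar>P1 j v i\<bar> \<le> 4 * k + 1" for j v i
  proof -
    have "0 \<le> P1 j v i" unfolding P1_def using gRk_bnd[of k j v] gS_bnd'[of k j v] s_bnd[of i] by simp
    moreover have "2 * (gRk k j v + gS (k - j) v) * s i \<le> 2 * (2 * real k) * 1"
      using gRk_bnd[of k j v] gS_bnd'[of k j v] s_bnd[of i] by (intro mult_mono) auto
    moreover have "(s i)^2 \<le> 1" using s_bnd[of i] by (simp add: power_le_one)
    ultimately show ?thesis unfolding P1_def by simp
  qed
  have b2: "\<bar>P2 j v i\<bar> \<le> 4 * k + 1" for j v i
  proof -
    have "0 \<le> P2 j v i" unfolding P2_def using gRk_bnd[of k j v] gS_bnd'[of k j v] r_bnd[of i] by simp
    moreover have "2 * (gRk k j v + gS (k - j) v) * r i \<le> 2 * (2 * real k) * 1"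
      using gRk_bnd[of k j v] gS_bnd'[of k j v] r_bnd[of i] by (intro mult_mono) auto
    moreover have "(r i)^2 \<le> 1" using r_bnd[of i] by (simp add: power_le_one)
    ultimately show ?thesis unfolding P2_def by simp
  qed
  have isq: "integrable M (\<lambda>w. (aa k w + bb k w)^2)"
  proof (rule bint[where B="(2*k)^2"])
    fix w
    have "(aa k w + bb k w)^2 \<le> (2*real k)^2"
      using aa_bnd[of k w] bb_bnd[of k w] by (intro power_mono) auto
    then show "\<bar>(aa k w + bb k w)^2\<bar> \<le> (2*k)^2" by simp
  qed simp
  have "expectation (\<lambda>w. (aa (Suc k) w + bb (Suc k) w)^2) = expectation (\<lambda>w. (aa k w + bb k w)^2)
    + expectation (\<lambda>w. if C (Suc k) w then P1 (Rcnt C k w) (V (Rcnt C k w) (k - Rcnt C k w) w) (LR (Suc (Rcnt C k w)) w) else 0)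
    + expectation (\<lambda>w. if \<not> C (Suc k) w then P2 (Rcnt C k w) (V (Rcnt C k w) (k - Rcnt C k w) w) (LS (Suc (k - Rcnt C k w)) w) else 0)"
  proof (rule step3[OF _ isq nR_int[where Phi=P1, OF m1 b1] nS_int[where Phi=P2, OF m2 b2]])
    fix w show "(aa (Suc k) w + bb (Suc k) w)^2 = (aa k w + bb k w)^2
      + (if C (Suc k) w then P1 (Rcnt C k w) (V (Rcnt C k w) (k - Rcnt C k w) w) (LR (Suc (Rcnt C k w)) w) else 0)
      + (if \<not> C (Suc k) w then P2 (Rcnt C k w) (V (Rcnt C k w) (k - Rcnt C k w) w) (LS (Suc (k - Rcnt C k w)) w) else 0)"
      unfolding P1_def P2_def gS_Vk gRk_Vk aa_Suc bb_Suc by (simp add: algebra_simps power2_eq_square)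
  qed
  also have "expectation (\<lambda>w. if C (Suc k) w then P1 (Rcnt C k w) (V (Rcnt C k w) (k - Rcnt C k w) w) (LR (Suc (Rcnt C k w)) w) else 0)
     = expectation (\<lambda>w. if C (Suc k) w then 2 * (aa k w + bb k w) * muR + e2R else 0)"
  proof -
    have i1: "(\<integral>i. P1 j v i \<partial>DR) = 2 * (gRk k j v + gS (k - j) v) * muR + e2R" for j v
      unfolding P1_def by (subst int_lin_R) simp
    show ?thesis using next_R[where Phi=P1, OF m1 b1, of k]
      by (simp only: i1 gS_Vk gRk_Vk cong: if_cong)
  qed
  also have "expectation (\<lambda>w. if \<not> C (Suc k) w then P2 (Rcnt C k w) (V (Rcnt C k w) (k - Rcnt C k w) w) (LS (Suc (k - Rcnt C k w)) w) else 0)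
     = expectation (\<lambda>w. if \<not> C (Suc k) w then 2 * (aa k w + bb k w) * muS + e2S else 0)"
  proof -
    have i2: "(\<integral>i. P2 j v i \<partial>DS) = 2 * (gRk k j v + gS (k - j) v) * muS + e2S" for j v
      unfolding P2_def by (subst int_lin_S) simp
    show ?thesis using next_S[where Phi=P2, OF m2 b2, of k]
      by (simp only: i2 gS_Vk gRk_Vk cong: if_cong)
  qed
  finally show ?thesis .
qed

end

context setting begin

lemma DR_single: "measure DR {n} = r n"
proof -
  have "measure DR {n} = prob {w\<in>space M. LR 1 w = n}" unfolding DR_def
    by (subst measure_distr) (auto intro!: arg_cong[where f=prob])
  then show ?thesis using LR_dist by auto
qed

lemma DS_single: "measure DS {n} = s n"
proof -
  have "measure DS {n} = prob {w\<in>space M. LS 1 w = n}" unfolding DS_def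
    by (subst measure_distr) (auto intro!: arg_cong[where f=prob])
  then show ?thesis using LS_dist by auto
qed

lemma int_countable:
  fixes D :: "nat measure" and g p :: "nat \<Rightarrow> real"
  assumes P: "prob_space D" and sD: "sets D = sets (count_space UNIV)"
    and single: "\<And>n. measure D {n} = p n" and pnn: "\<And>n. 0 \<le> p n" and ps: "summable p"
    and gb: "\<And>n. \<bar>g n\<bar> \<le> 1"
  shows "(\<integral>i. g i \<partial>D) = (\<Sum>n. g n * p n)"
proof -
  interpret P: prob_space D by (rule P)
  define f where "f n i = g n * indicator {n} i" for n i :: nat
  have fi: "integrable D (f n)" for n
    unfolding f_def by (rule P.integrable_const_bound[where B=1])
      (use gb sD in \<open>auto simp: indicator_def measurable_cong_sets[OF sD refl] intro: order_trans\<close>)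
  have sum_eq: "(\<Sum>n. f n i) = g i" for i
  proof -
    have "(\<lambda>n. f n i) = (\<lambda>n. if n = i then g n else 0)" by (auto simp: f_def fun_eq_iff)
    then show ?thesis using sums_single[of i g] sums_unique by metis
  qed
  have int_abs: "(\<integral>i. norm (f n i) \<partial>D) = \<bar>g n\<bar> * p n" for n
  proof -
    have "(\<lambda>i. norm (f n i)) = (\<lambda>i. \<bar>g n\<bar> * indicator {n} i)" by (auto simp: f_def fun_eq_iff indicator_def)
    then show ?thesis using single[of n] sD by (simp add: sets_eq_imp_space_eq[OF sD])
  qed
  have int_f: "(\<integral>i. f n i \<partial>D) = g n * p n" for n
    using single[of n] sD by (simp add: f_def sets_eq_imp_space_eq[OF sD])
  have summ: "summable (\<lambda>n. \<integral>i. norm (f n i) \<partial>D)"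
    unfolding int_abs
  proof (rule summable_comparison_test[OF _ ps])
    show "\<exists>N. \<forall>n\<ge>N. norm (\<bar>g n\<bar> * p n) \<le> p n"
      using gb pnn by (auto simp: abs_mult intro!: mult_left_le_one_le)
  qed
  have ae: "AE x in D. summable (\<lambda>n. norm (f n x))"
  proof (rule AE_I2)
    fix x
    have "(\<lambda>n. norm (f n x)) = (\<lambda>n. if n = x then norm (g n) else 0)" by (auto simp: f_def fun_eq_iff)
    then show "summable (\<lambda>n. norm (f n x))" by simp
  qed
  have "(\<integral>i. (\<Sum>n. f n i) \<partial>D) = (\<Sum>n. \<integral>i. f n i \<partial>D)"
    by (rule integral_suminf[OF fi ae summ])
  then show ?thesis by (simp add: sum_eq int_f)
qed

lemma muR_eq: "muR = (\<Sum>i. r i * s i)"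
proof -
  have "muR = (\<Sum>n. s n * r n)" unfolding muR_def
    by (rule int_countable[OF DR_prob sets_DR DR_single]) (use r_prob sums_summable s_bnd in auto)
  then show ?thesis by (simp add: mult.commute)
qed

lemma muS_eq: "muS = (\<Sum>i. r i * s i)"
  unfolding muS_def
  by (rule int_countable[OF DS_prob sets_DS DS_single]) (use s_prob sums_summable r_bnd in auto)

lemma muR_E: "muR = expectation (\<lambda>w. s (LR 1 w))"
  unfolding muR_def DR_def by (rule integral_distr) simp_all
lemma e2R_E: "e2R = expectation (\<lambda>w. (s (LR 1 w))^2)"
  unfolding e2R_def DR_def by (rule integral_distr) simp_all
lemma muS_E: "muS = expectation (\<lambda>w. r (LS 1 w))"
  unfolding muS_def DS_def by (rule integral_distr) simp_all
lemma e2S_E: "e2S = expectation (\<lambda>w. (r (LS 1 w))^2)"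
  unfolding e2S_def DS_def by (rule integral_distr) simp_all

lemma varR: "variance (\<lambda>w. s (LR 1 w)) = e2R - muR^2"
proof -
  have i1: "integrable M (\<lambda>w. s (LR 1 w))" by (rule bint[where B=1]) (use s_bnd in auto)
  have i2: "integrable M (\<lambda>w. (s (LR 1 w))^2)"
    by (rule bint[where B=1]) (use s_bnd in \<open>auto simp: power_le_one abs_le_iff\<close>)
  show ?thesis unfolding variance_eq[OF i1 i2] muR_E e2R_E ..
qed

lemma varS: "variance (\<lambda>w. r (LS 1 w)) = e2S - muS^2"
proof -
  have i1: "integrable M (\<lambda>w. r (LS 1 w))" by (rule bint[where B=1]) (use r_bnd in auto)
  have i2: "integrable M (\<lambda>w. (r (LS 1 w))^2)"
    by (rule bint[where B=1]) (use r_bnd in \<open>auto simp: power_le_one abs_le_iff\<close>)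
  show ?thesis unfolding variance_eq[OF i1 i2] muS_E e2S_E ..
qed

end

context policy begin

lemma muS_muR: "muS = muR" using muR_eq muS_eq by simp

lemma rho: "expectation (\<lambda>w. real (Rcnt C n w)) = (\<Sum>k<n. pC k)"
  by (induction n) (simp_all add: E_R)

lemma aa0: "aa 0 w = 0" by (simp add: aa_def Gamma_def)
lemma bb0: "bb 0 w = 0" by (simp add: bb_def Gamma_def Scnt_def)
lemma MM0: "MM 0 w = 0" by (simp add: MM_def Mx_def Scnt_def)

lemma Eaa: "expectation (aa n) = muR * (\<Sum>k<n. pC k)"
  by (induction n) (simp_all add: E_aa aa0 algebra_simps)

lemma Ebb: "expectation (bb n) = muS * (real n - (\<Sum>k<n. pC k))"
  by (induction n) (simp_all add: E_bb bb0 algebra_simps)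

lemma EMM: "muR * expectation (MM n) = expectation (\<lambda>w. aa n w * bb n w)"
proof (induction n)
  case 0 then show ?case by (simp add: MM0 aa0)
next
  case (Suc k)
  show ?case unfolding E_MM E_ab muS_muR using Suc by (simp add: algebra_simps)
qed

lemma Esum: "expectation (\<lambda>w. aa n w + bb n w) = muR * real n"
proof -
  have "expectation (\<lambda>w. aa n w + bb n w) = expectation (aa n) + expectation (bb n)"
    by (rule Bochner_Integration.integral_add[OF aa_int bb_int])
  then show ?thesis by (simp add: Eaa Ebb muS_muR algebra_simps)
qed

lemma split_if:
  assumes fm: "f \<in> borel_measurable M" and fb: "\<And>w. w \<in> space M \<Longrightarrow> \<bar>f w\<bar> \<le> B"
  shows "expectation (\<lambda>w. if C (Suc k) w then f w + c1 else 0) + expectation (\<lambda>w. if \<not> C (Suc k) w then f w + c2 else 0)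
    = expectation f + c1 * pC k + c2 * (1 - pC k)"
proof -
  have fi: "integrable M f" by (rule bint[OF fm fb])
  have m1: "(\<lambda>w. if C (Suc k) w then f w else 0) \<in> borel_measurable M"
    by (rule measurable_If[OF fm measurable_const C_set]) simp
  have m2: "(\<lambda>w. if \<not> C (Suc k) w then f w else 0) \<in> borel_measurable M"
    by (rule measurable_If[OF fm measurable_const nC_set]) simp
  have b1: "\<bar>if C (Suc k) w then f w else 0\<bar> \<le> \<bar>B\<bar>" if "w \<in> space M" for w
    using fb[OF that] by auto
  have b2: "\<bar>if \<not> C (Suc k) w then f w else 0\<bar> \<le> \<bar>B\<bar>" if "w \<in> space M" for w
    using fb[OF that] by auto
  have i1: "integrable M (\<lambda>w. if C (Suc k) w then f w else 0)" by (rule bint[OF m1 b1])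
  have i2: "integrable M (\<lambda>w. if \<not> C (Suc k) w then f w else 0)" by (rule bint[OF m2 b2])
  have c1i: "integrable M (\<lambda>w. if C (Suc k) w then c1 else 0)" by (rule bint[where B="\<bar>c1\<bar>"]) auto
  have c2i: "integrable M (\<lambda>w. if \<not> C (Suc k) w then c2 else 0)" by (rule bint[where B="\<bar>c2\<bar>"]) auto
  have "expectation (\<lambda>w. if C (Suc k) w then f w + c1 else 0)
      = expectation (\<lambda>w. (if C (Suc k) w then f w else 0) + (if C (Suc k) w then c1 else 0))"
    by (rule Bochner_Integration.integral_cong) auto
  also have "\<dots> = expectation (\<lambda>w. if C (Suc k) w then f w else 0) + c1 * pC k"
    by (subst Bochner_Integration.integral_add[OF i1 c1i]) (simp add: ifC)
  finally have e1: "expectation (\<lambda>w. if C (Suc k) w then f w + c1 else 0) = expectation (\<lambda>w. if C (Suc k) w then f w else 0) + c1 * pC k" .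
  have "expectation (\<lambda>w. if \<not> C (Suc k) w then f w + c2 else 0)
      = expectation (\<lambda>w. (if \<not> C (Suc k) w then f w else 0) + (if \<not> C (Suc k) w then c2 else 0))"
    by (rule Bochner_Integration.integral_cong) auto
  also have "\<dots> = expectation (\<lambda>w. if \<not> C (Suc k) w then f w else 0) + c2 * (1 - pC k)"
    by (subst Bochner_Integration.integral_add[OF i2 c2i]) (simp add: ifnC)
  finally have e2: "expectation (\<lambda>w. if \<not> C (Suc k) w then f w + c2 else 0) = expectation (\<lambda>w. if \<not> C (Suc k) w then f w else 0) + c2 * (1 - pC k)" .
  have "expectation (\<lambda>w. if C (Suc k) w then f w else 0) + expectation (\<lambda>w. if \<not> C (Suc k) w then f w else 0)
      = expectation (\<lambda>w. (if C (Suc k) w then f w else 0) + (if \<not> C (Suc k) w then f w else 0))"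
    by (rule Bochner_Integration.integral_add[OF i1 i2, symmetric])
  also have "\<dots> = expectation f" by (rule Bochner_Integration.integral_cong) auto
  finally show ?thesis using e1 e2 by simp
qed

lemma Esq: "expectation (\<lambda>w. (aa n w + bb n w)^2) = muR^2 * real n * (real n - 1) + e2S * real n + (e2R - e2S) * (\<Sum>k<n. pC k)"
proof (induction n)
  case 0 then show ?case by (simp add: aa0 bb0)
next
  case (Suc k)
  have fm: "(\<lambda>w. 2 * (aa k w + bb k w) * muR) \<in> borel_measurable M" by measurable
  have fb: "\<bar>2 * (aa k w + bb k w) * muR\<bar> \<le> 4 * k * \<bar>muR\<bar>" for w
  proof -
    have "\<bar>2 * (aa k w + bb k w)\<bar> \<le> 4 * k" using aa_bnd[of k w] bb_bnd[of k w] by simp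
    then show ?thesis by (simp add: abs_mult mult_right_mono)
  qed
  have "expectation (\<lambda>w. (aa (Suc k) w + bb (Suc k) w)^2) = expectation (\<lambda>w. (aa k w + bb k w)^2)
     + (expectation (\<lambda>w. 2 * (aa k w + bb k w) * muR) + e2R * pC k + e2S * (1 - pC k))"
    unfolding E_sq muS_muR using split_if[OF fm fb, of k e2R e2S] by simp
  also have "expectation (\<lambda>w. 2 * (aa k w + bb k w) * muR) = expectation (\<lambda>w. (2 * muR) * (aa k w + bb k w))"
    by (rule Bochner_Integration.integral_cong) auto
  also have "\<dots> = 2 * muR * expectation (\<lambda>w. aa k w + bb k w)"
    by (rule integral_mult_right_zero)
  also have "\<dots> = 2 * muR^2 * k" by (simp add: Esum power2_eq_square)
  finally show ?case unfolding Suc by (simp add: algebra_simps power2_eq_square)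
qed

end

context policy begin

lemma matches_MM: "real (matches LR LS C n w) = MM n w"
  unfolding matches_sum MM_def Mx_def ..

lemma D_bnd:
  assumes gr: "\<forall>n\<ge>1. \<forall>w\<in>space M.
        (Gamma r LS (Scnt C n w) w > Gamma s LR (Rcnt C n w) w \<longrightarrow> C (Suc n) w) \<and>
        (Gamma r LS (Scnt C n w) w < Gamma s LR (Rcnt C n w) w \<longrightarrow> \<not> C (Suc n) w)"
    and w: "w \<in> space M"
  shows "\<bar>aa n w - bb n w\<bar> \<le> 1"
proof (induction n)
  case 0 then show ?case by (simp add: aa0 bb0)
next
  case (Suc n)
  define x where "x = s (LR (Suc (Rcnt C n w)) w)"
  define y where "y = r (LS (Suc (n - Rcnt C n w)) w)"
  have x: "0 \<le> x" "x \<le> 1" unfolding x_def using s_bnd by auto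
  have y: "0 \<le> y" "y \<le> 1" unfolding y_def using r_bnd by auto
  have d0: "n = 0 \<Longrightarrow> aa n w - bb n w = 0" by (simp add: aa0 bb0)
  show ?case
  proof (cases "C (Suc n) w")
    case True
    have "aa n w - bb n w \<le> 0"
    proof (cases "n = 0")
      case True then show ?thesis using d0 by simp
    next
      case False
      then have "n \<ge> 1" by simp
      with gr w \<open>C (Suc n) w\<close> have "\<not> (bb n w < aa n w)" unfolding aa_def bb_def by blast
      then show ?thesis by simp
    qed
    moreover have "aa (Suc n) w = aa n w + x" "bb (Suc n) w = bb n w"
      using True by (simp_all add: aa_Suc bb_Suc x_def)
    ultimately show ?thesis using Suc x by (simp add: abs_le_iff)
  next
    case False
    have "0 \<le> aa n w - bb n w"
    proof (cases "n = 0")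
      case True then show ?thesis using d0 by simp
    next
      case False
      then have "n \<ge> 1" by simp
      with gr w \<open>\<not> C (Suc n) w\<close> have "\<not> (bb n w > aa n w)" unfolding aa_def bb_def by blast
      then show ?thesis by simp
    qed
    moreover have "aa (Suc n) w = aa n w" "bb (Suc n) w = bb n w + y"
      using False by (simp_all add: aa_Suc bb_Suc y_def)
    ultimately show ?thesis using Suc y by (simp add: abs_le_iff)
  qed
qed

lemma greedy_facts:
  assumes gr: "\<forall>n\<ge>1. \<forall>w\<in>space M.
        (Gamma r LS (Scnt C n w) w > Gamma s LR (Rcnt C n w) w \<longrightarrow> C (Suc n) w) \<and>
        (Gamma r LS (Scnt C n w) w < Gamma s LR (Rcnt C n w) w \<longrightarrow> \<not> C (Suc n) w)"
  shows "\<exists>Q. 0 \<le> Q \<and> Q \<le> 1 \<and> 4 * muR * expectation (MM n) = expectation (\<lambda>w. (aa n w + bb n w)^2) - Q"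
    and "\<bar>muR * (\<Sum>k<n. pC k) - muR * (real n - (\<Sum>k<n. pC k))\<bar> \<le> 1"
proof -
  have db: "\<bar>aa n w - bb n w\<bar> \<le> 1" if "w \<in> space M" for w by (rule D_bnd[OF gr that])
  have isq: "integrable M (\<lambda>w. (aa n w + bb n w)^2)"
  proof (rule bint[where B="(2*n)^2"])
    fix w
    have "(aa n w + bb n w)^2 \<le> (2*real n)^2"
      using aa_bnd[of n w] bb_bnd[of n w] by (intro power_mono) auto
    then show "\<bar>(aa n w + bb n w)^2\<bar> \<le> (2*n)^2" by simp
  qed simp
  have idq: "integrable M (\<lambda>w. (aa n w - bb n w)^2)"
  proof (rule bint[where B=1])
    fix w assume "w \<in> space M"
    then have "\<bar>aa n w - bb n w\<bar> \<le> 1" by (rule db)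
    then have "(aa n w - bb n w)^2 \<le> 1" by (simp add: abs_le_iff power_le_one abs_square_le_1)
    then show "\<bar>(aa n w - bb n w)^2\<bar> \<le> 1" by simp
  qed simp
  have idd: "integrable M (\<lambda>w. aa n w - bb n w)"
    by (rule Bochner_Integration.integrable_diff[OF aa_int bb_int])
  define Q where "Q = expectation (\<lambda>w. (aa n w - bb n w)^2)"
  have Q0: "0 \<le> Q" unfolding Q_def by (rule Bochner_Integration.integral_nonneg) simp
  have Q1: "Q \<le> 1" unfolding Q_def
  proof (rule integral_le_const[OF idq], rule AE_I2)
    fix w assume "w \<in> space M"
    then have "\<bar>aa n w - bb n w\<bar> \<le> 1" by (rule db)
    then show "(aa n w - bb n w)^2 \<le> 1" by (simp add: abs_square_le_1)
  qed
  have "4 * muR * expectation (MM n) = 4 * expectation (\<lambda>w. aa n w * bb n w)" using EMM[of n] by simp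
  also have "\<dots> = expectation (\<lambda>w. 4 * (aa n w * bb n w))" by simp
  also have "\<dots> = expectation (\<lambda>w. (aa n w + bb n w)^2 - (aa n w - bb n w)^2)"
    by (rule Bochner_Integration.integral_cong) (auto simp: power2_eq_square algebra_simps)
  also have "\<dots> = expectation (\<lambda>w. (aa n w + bb n w)^2) - Q"
    unfolding Q_def by (rule Bochner_Integration.integral_diff[OF isq idq])
  finally show "\<exists>Q. 0 \<le> Q \<and> Q \<le> 1 \<and> 4 * muR * expectation (MM n) = expectation (\<lambda>w. (aa n w + bb n w)^2) - Q"
    using Q0 Q1 by blast
  have "expectation (aa n) - expectation (bb n) = expectation (\<lambda>w. aa n w - bb n w)"
    by (rule Bochner_Integration.integral_diff[OF aa_int bb_int, symmetric])
  moreover have "expectation (\<lambda>w. aa n w - bb n w) \<le> 1"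
    by (rule integral_le_const[OF idd], rule AE_I2) (use db in \<open>auto simp: abs_le_iff\<close>)
  moreover have "-1 \<le> expectation (\<lambda>w. aa n w - bb n w)"
  proof (rule integral_ge_const[OF idd], rule AE_I2)
    fix w assume "w \<in> space M"
    from db[OF this] show "-1 \<le> aa n w - bb n w" by linarith
  qed
  ultimately show "\<bar>muR * (\<Sum>k<n. pC k) - muR * (real n - (\<Sum>k<n. pC k))\<bar> \<le> 1"
    using Eaa[of n] Ebb[of n] muS_muR by (simp add: abs_le_iff)
qed

end

context setting begin

lemma U_lab:
  assumes B: "B \<in> sets N" and q: "q \<ge> 1"
  shows "expectation (\<lambda>w. indicator B (U w) * s (LR q w)) = muR * prob {w\<in>space M. U w \<in> B}"
    and "expectation (\<lambda>w. indicator B (U w) * r (LS q w)) = muS * prob {w\<in>space M. U w \<in> B}"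
proof -
  have Bm: "(\<lambda>v. indicator B (fst v) :: real) \<in> borel_measurable Tm"
    using measurable_compose[OF Tm_fst borel_measurable_indicator[OF B]] by (simp add: comp_def)
  have iB: "integrable M (\<lambda>w. indicator B (U w) :: real)"
    by (rule bint[where B=1]) (use B in auto)
  have PB: "expectation (\<lambda>w. indicator B (U w) :: real) = prob {w\<in>space M. U w \<in> B}"
  proof -
    have "(\<lambda>w. indicator B (U w) :: real) = indicator (U -` B)" by (auto simp: indicator_def fun_eq_iff)
    moreover have "U -` B \<inter> space M = {w\<in>space M. U w \<in> B}" by auto
    ultimately show ?thesis by simp
  qed
  {
    have F: "(\<lambda>z. indicator B (fst (fst z)) * s (snd z)) \<in> borel_measurable (Tm \<Otimes>\<^sub>M count_space UNIV)"
      using Bm by measurable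
    have "expectation (\<lambda>w. indicator B (U w) * s (LR q w))
        = expectation (\<lambda>w. (\<lambda>z. indicator B (fst (fst z)) * s (snd z)) (V (q-1) 0 w, LR q w))"
      by (simp add: V_def)
    also have "\<dots> = expectation (\<lambda>w. \<integral>i. (\<lambda>z. indicator B (fst (fst z)) * s (snd z)) (V (q-1) 0 w, i) \<partial>distr M (count_space UNIV) (LR q))"
    proof (rule indep_integral[OF V_meas LR_m _ F])
      fix A and Cs :: "nat set" assume A: "A \<in> sets Tm"
      have "Inl q \<in> ({1..} <+> {1..})" "Inl q \<notin> KK (q-1) 0" using q by (auto simp: KK_def)
      from indep_lab[OF this A, of Cs]
      show "prob {w \<in> space M. V (q-1) 0 w \<in> A \<and> LR q w \<in> Cs} = prob {w \<in> space M. V (q-1) 0 w \<in> A} * prob {w \<in> space M. LR q w \<in> Cs}"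
        by (simp add: Lab_def)
    next
      fix z show "\<bar>indicator B (fst (fst z)) * s (snd z)\<bar> \<le> 1" using s_bnd[of "snd z"] by (simp add: indicator_def)
    qed
    also have "\<dots> = expectation (\<lambda>w. indicator B (U w) * muR)"
      using distr_LR[OF q] by (simp add: V_def muR_def)
    also have "\<dots> = muR * prob {w\<in>space M. U w \<in> B}" using PB by (simp add: mult.commute)
    finally show "expectation (\<lambda>w. indicator B (U w) * s (LR q w)) = muR * prob {w\<in>space M. U w \<in> B}" .
  }
  {
    have F: "(\<lambda>z. indicator B (fst (fst z)) * r (snd z)) \<in> borel_measurable (Tm \<Otimes>\<^sub>M count_space UNIV)"
      using Bm by measurable
    have "expectation (\<lambda>w. indicator B (U w) * r (LS q w))
        = expectation (\<lambda>w. (\<lambda>z. indicator B (fst (fst z)) * r (snd z)) (V 0 (q-1) w, LS q w))"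
      by (simp add: V_def)
    also have "\<dots> = expectation (\<lambda>w. \<integral>i. (\<lambda>z. indicator B (fst (fst z)) * r (snd z)) (V 0 (q-1) w, i) \<partial>distr M (count_space UNIV) (LS q))"
    proof (rule indep_integral[OF V_meas LS_m _ F])
      fix A and Cs :: "nat set" assume A: "A \<in> sets Tm"
      have "Inr q \<in> ({1..} <+> {1..})" "Inr q \<notin> KK 0 (q-1)" using q by (auto simp: KK_def)
      from indep_lab[OF this A, of Cs]
      show "prob {w \<in> space M. V 0 (q-1) w \<in> A \<and> LS q w \<in> Cs} = prob {w \<in> space M. V 0 (q-1) w \<in> A} * prob {w \<in> space M. LS q w \<in> Cs}"
        by (simp add: Lab_def)
    next
      fix z show "\<bar>indicator B (fst (fst z)) * r (snd z)\<bar> \<le> 1" using r_bnd[of "snd z"] by (simp add: indicator_def)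
    qed
    also have "\<dots> = expectation (\<lambda>w. indicator B (U w) * muS)"
      using distr_LS[OF q] by (simp add: V_def muS_def)
    also have "\<dots> = muS * prob {w\<in>space M. U w \<in> B}" using PB by (simp add: mult.commute)
    finally show "expectation (\<lambda>w. indicator B (U w) * r (LS q w)) = muS * prob {w\<in>space M. U w \<in> B}" .
  }
qed

lemma U_Gamma:
  assumes B: "B \<in> sets N"
  shows "expectation (\<lambda>w. indicator B (U w) * Gamma s LR p w) = muR * p * prob {w\<in>space M. U w \<in> B}"
    and "expectation (\<lambda>w. indicator B (U w) * Gamma r LS p w) = muS * p * prob {w\<in>space M. U w \<in> B}"
proof -
  have iB: "integrable M (\<lambda>w. indicator B (U w) * s (LR q w))" for q
    by (rule bint[where B=1]) (use B s_bnd in \<open>auto simp: indicator_def\<close>)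
  have "expectation (\<lambda>w. indicator B (U w) * Gamma s LR p w) = expectation (\<lambda>w. \<Sum>q\<in>{1..p}. indicator B (U w) * s (LR q w))"
    by (simp add: Gamma_def sum_distrib_left)
  also have "\<dots> = (\<Sum>q\<in>{1..p}. expectation (\<lambda>w. indicator B (U w) * s (LR q w)))"
    by (rule Bochner_Integration.integral_sum) (rule iB)
  also have "\<dots> = (\<Sum>q\<in>{1..p}. muR * prob {w\<in>space M. U w \<in> B})"
    by (intro sum.cong refl U_lab(1)[OF B]) auto
  finally show "expectation (\<lambda>w. indicator B (U w) * Gamma s LR p w) = muR * p * prob {w\<in>space M. U w \<in> B}" by simp
  have iB': "integrable M (\<lambda>w. indicator B (U w) * r (LS q w))" for q
    by (rule bint[where B=1]) (use B r_bnd in \<open>auto simp: indicator_def\<close>)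
  have "expectation (\<lambda>w. indicator B (U w) * Gamma r LS p w) = expectation (\<lambda>w. \<Sum>q\<in>{1..p}. indicator B (U w) * r (LS q w))"
    by (simp add: Gamma_def sum_distrib_left)
  also have "\<dots> = (\<Sum>q\<in>{1..p}. expectation (\<lambda>w. indicator B (U w) * r (LS q w)))"
    by (rule Bochner_Integration.integral_sum) (rule iB')
  also have "\<dots> = (\<Sum>q\<in>{1..p}. muS * prob {w\<in>space M. U w \<in> B})"
    by (intro sum.cong refl U_lab(2)[OF B]) auto
  finally show "expectation (\<lambda>w. indicator B (U w) * Gamma r LS p w) = muS * p * prob {w\<in>space M. U w \<in> B}" by simp
qed

lemma Uvimage_info:
  fixes f :: "'a \<Rightarrow> bool"
  assumes f: "f \<in> measurable (vimage_algebra (space M) U N) (count_space UNIV)"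
  shows "f \<in> measurable (info_alg M U N LR LS C n) (count_space UNIV)"
proof (rule measurable_count_space_eq2_countable[THEN iffD2], safe)
  fix a :: bool
  have "f -` {a} \<inter> space (vimage_algebra (space M) U N) \<in> sets (vimage_algebra (space M) U N)"
    by (rule measurable_sets[OF f]) simp
  moreover have "U \<in> space M \<rightarrow> space N" using measurable_space[OF U_m] by auto
  ultimately obtain A where A: "A \<in> sets N" "f -` {a} \<inter> space M = U -` A \<inter> space M"
    by (auto simp: sets_vimage_algebra2)
  define W where "W w = (U w, trunc LR (Rcnt C n w) w, trunc LS (Scnt C n w) w)" for w
  have "U -` A \<inter> space M = W -` (A \<times> space (PP \<Otimes>\<^sub>M PP)) \<inter> space M"
    by (auto simp: W_def space_pair_measure space_PiM)
  moreover have "W -` (A \<times> space (PP \<Otimes>\<^sub>M PP)) \<inter> space M \<in> sets (info_alg M U N LR LS C n)"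
    unfolding info_alg_def W_def[abs_def]
    by (rule in_vimage_algebra) (use A(1) in \<open>auto intro: pair_measureI\<close>)
  ultimately show "f -` {a} \<inter> space (info_alg M U N LR LS C n) \<in> sets (info_alg M U N LR LS C n)"
    using A(2) by (simp add: info_alg_def)
qed simp

end

lemma sum_div2: "4 * (\<Sum>k<n. Suc k div 2) + n mod 2 = n * (n::nat)"
proof (induction n)
  case 0 then show ?case by simp
next
  case (Suc n)
  define S where "S = (\<Sum>k<n. Suc k div 2)"
  have h1: "4 * S + n mod 2 = n * n" using Suc unfolding S_def .
  have h2: "4 * (Suc n div 2) + Suc n mod 2 = 2 * n + 1 + n mod 2"
  proof -
    obtain m where "n = 2 * m \<or> n = 2 * m + 1" by (metis odd_two_times_div_two_succ even_two_times_div_two)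
    then show ?thesis by auto
  qed
  have "4 * (\<Sum>k<Suc n. Suc k div 2) + Suc n mod 2 = 4 * S + 4 * (Suc n div 2) + Suc n mod 2"
    unfolding S_def by simp
  also have "\<dots> = n * n + 2 * n + 1" using h1 h2 by linarith
  also have "\<dots> = Suc n * Suc n" by simp
  finally show ?case .
qed

context policy begin

lemma alt_step:
  assumes aU: "\<forall>n. C n \<in> measurable (vimage_algebra (space M) U N) (count_space UNIV)"
    and aR: "\<forall>n. \<forall>w\<in>space M. Rcnt C (2 * n) w = n"
  shows "expectation (MM (Suc k)) = expectation (MM k) + muR * real (Suc k div 2)"
proof -
  have Bex: "\<exists>B\<in>sets N. \<forall>w\<in>space M. C n w = (U w \<in> B)" for n
  proof -
    have "C n -` {True} \<inter> space (vimage_algebra (space M) U N) \<in> sets (vimage_algebra (space M) U N)"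
      by (rule measurable_sets) (use aU in auto)
    moreover have "U \<in> space M \<rightarrow> space N" using measurable_space[OF U_m] by auto
    ultimately obtain A where A: "A \<in> sets N" "C n -` {True} \<inter> space M = U -` A \<inter> space M"
      by (auto simp: sets_vimage_algebra2)
    have "\<forall>w\<in>space M. C n w = (U w \<in> A)"
    proof
      fix w assume w: "w \<in> space M"
      have "(w \<in> C n -` {True} \<inter> space M) = (w \<in> U -` A \<inter> space M)" using A(2) by simp
      then show "C n w = (U w \<in> A)" using w by simp
    qed
    then show ?thesis using A(1) by blast
  qed
  have Ucompl: "prob {w\<in>space M. U w \<in> space N - B} = 1 - prob {w\<in>space M. U w \<in> B}" if "B \<in> sets N" for B
  proof -
    have "{w\<in>space M. U w \<in> space N - B} = space M - {w\<in>space M. U w \<in> B}"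
      using measurable_space[OF U_m] by auto
    moreover have "{w\<in>space M. U w \<in> B} \<in> events" using that by measurable
    ultimately show ?thesis by (simp add: prob_compl)
  qed
  obtain m where km: "k = 2 * m \<or> k = 2 * m + 1" by (metis dvd_mult_div_cancel odd_two_times_div_two_succ mult_2 dvd_triv_left)
  have inc: "expectation (\<lambda>w. if C (Suc k) w then bb k w else 0) + expectation (\<lambda>w. if \<not> C (Suc k) w then aa k w else 0)
      = muR * real (Suc k div 2)"
  proof (cases "k = 2 * m")
    case True
    obtain B where B: "B \<in> sets N" "\<forall>w\<in>space M. C (Suc k) w = (U w \<in> B)" using Bex by blast
    have R: "Rcnt C k w = m" if "w \<in> space M" for w using aR that True by auto
    have "expectation (\<lambda>w. if C (Suc k) w then bb k w else 0) = expectation (\<lambda>w. indicator B (U w) * Gamma r LS m w)"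
      by (rule Bochner_Integration.integral_cong) (use B R True in \<open>auto simp: bb_def Scnt_def indicator_def\<close>)
    also have "\<dots> = muS * m * prob {w\<in>space M. U w \<in> B}" by (rule U_Gamma(2)[OF B(1)])
    finally have e1: "expectation (\<lambda>w. if C (Suc k) w then bb k w else 0) = muS * m * prob {w\<in>space M. U w \<in> B}" .
    have "expectation (\<lambda>w. if \<not> C (Suc k) w then aa k w else 0) = expectation (\<lambda>w. indicator (space N - B) (U w) * Gamma s LR m w)"
    proof (rule Bochner_Integration.integral_cong)
      fix w assume w: "w \<in> space M"
      then have "U w \<in> space N" using measurable_space[OF U_m] by auto
      then show "(if \<not> C (Suc k) w then aa k w else 0) = indicator (space N - B) (U w) * Gamma s LR m w"
        using B(2) w R[OF w] by (auto simp: aa_def indicator_def)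
    qed simp
    also have "\<dots> = muR * m * prob {w\<in>space M. U w \<in> space N - B}" by (rule U_Gamma(1)) (use B in auto)
    finally have e2: "expectation (\<lambda>w. if \<not> C (Suc k) w then aa k w else 0) = muR * m * (1 - prob {w\<in>space M. U w \<in> B})"
      using Ucompl[OF B(1)] by simp
    have "Suc k div 2 = m" using True by simp
    then show ?thesis using e1 e2 muS_muR by (simp add: algebra_simps)
  next
    case False
    then have k: "k = 2 * m + 1" using km by simp
    obtain B where B: "B \<in> sets N" "\<forall>w\<in>space M. C (Suc (2 * m)) w = (U w \<in> B)" using Bex by blast
    have C2: "C (Suc k) w = (\<not> C (Suc (2 * m)) w)" if w: "w \<in> space M" for w
    proof -
      have a1: "Rcnt C (2 * Suc m) w = Suc m" using aR w by blast
      have a2: "Rcnt C (2 * m) w = m" using aR w by blast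
      have "2 * Suc m = Suc (Suc (2 * m))" by simp
      then have a3: "Rcnt C (Suc (Suc (2 * m))) w = Suc m" using a1 by simp
      have "Rcnt C (Suc (Suc (2 * m))) w = Rcnt C (2 * m) w + (if C (Suc (2 * m)) w then 1 else 0) + (if C (Suc (Suc (2 * m))) w then 1 else 0)"
        by (simp only: Rcnt_Suc)
      then have "Suc m = m + (if C (Suc (2 * m)) w then 1 else 0) + (if C (Suc (Suc (2 * m))) w then 1 else 0)"
        using a2 a3 by linarith
      then have "C (Suc (Suc (2*m))) w = (\<not> C (Suc (2*m)) w)" by (auto split: if_splits)
      moreover have "Suc k = Suc (Suc (2*m))" using k by simp
      ultimately show ?thesis by (simp only:)
    qed
    have R1: "Rcnt C k w = m + (if C (Suc (2 * m)) w then 1 else 0)" if w: "w \<in> space M" for w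
      using aR w k by (simp add: Rcnt_Suc)
    have "expectation (\<lambda>w. if C (Suc k) w then bb k w else 0) = expectation (\<lambda>w. indicator (space N - B) (U w) * Gamma r LS (Suc m) w)"
    proof (rule Bochner_Integration.integral_cong)
      fix w assume w: "w \<in> space M"
      then have "U w \<in> space N" using measurable_space[OF U_m] by auto
      then show "(if C (Suc k) w then bb k w else 0) = indicator (space N - B) (U w) * Gamma r LS (Suc m) w"
        using B(2) w R1[OF w] C2[OF w] k by (auto simp: bb_def Scnt_def indicator_def)
    qed simp
    also have "\<dots> = muS * Suc m * prob {w\<in>space M. U w \<in> space N - B}" by (rule U_Gamma(2)) (use B in auto)
    finally have e1: "expectation (\<lambda>w. if C (Suc k) w then bb k w else 0) = muS * Suc m * (1 - prob {w\<in>space M. U w \<in> B})"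
      using Ucompl[OF B(1)] by simp
    have "expectation (\<lambda>w. if \<not> C (Suc k) w then aa k w else 0) = expectation (\<lambda>w. indicator B (U w) * Gamma s LR (Suc m) w)"
      by (rule Bochner_Integration.integral_cong) (use B R1 C2 in \<open>auto simp: aa_def indicator_def\<close>)
    also have "\<dots> = muR * Suc m * prob {w\<in>space M. U w \<in> B}" by (rule U_Gamma(1)[OF B(1)])
    finally have e2: "expectation (\<lambda>w. if \<not> C (Suc k) w then aa k w else 0) = muR * Suc m * prob {w\<in>space M. U w \<in> B}" .
    have "Suc k div 2 = Suc m" using k by simp
    then show ?thesis using e1 e2 muS_muR by (simp add: algebra_simps)
  qed
  show ?thesis using E_MM[of k] inc by simp
qed

lemma alt_EMM:
  assumes aU: "\<forall>n. C n \<in> measurable (vimage_algebra (space M) U N) (count_space UNIV)"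
    and aR: "\<forall>n. \<forall>w\<in>space M. Rcnt C (2 * n) w = n"
  shows "4 * expectation (MM n) = muR * (real n * real n - real (n mod 2))"
proof -
  have "expectation (MM n) = muR * real (\<Sum>k<n. Suc k div 2)"
    by (induction n) (simp_all add: alt_step[OF aU aR] MM0 algebra_simps)
  moreover have h: "4 * real (\<Sum>k<n. Suc k div 2) = real n * real n - real (n mod 2)"
  proof -
    have "real (4 * (\<Sum>k<n. Suc k div 2) + n mod 2) = real (n * n)" using sum_div2[of n] by simp
    then show ?thesis by simp
  qed
  ultimately have "4 * expectation (MM n) = muR * (4 * real (\<Sum>k<n. Suc k div 2))" by simp
  then show ?thesis unfolding h .
qed

end

lemma limit_helper:
  fixes D :: "nat \<Rightarrow> real"
  assumes "\<And>n. n \<ge> 1 \<Longrightarrow> \<bar>D n - c\<bar> \<le> K / real n"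
  shows "D \<longlonglongrightarrow> c"
proof -
  have "(\<lambda>n. D n - c) \<longlonglongrightarrow> 0"
  proof (rule tendsto_0_le[where K=K])
    show "(\<lambda>n. 1 / real n) \<longlonglongrightarrow> 0" by (rule lim_const_over_n)
    show "\<forall>\<^sub>F n in sequentially. norm (D n - c) \<le> norm (1 / real n) * K"
      using eventually_ge_at_top[of "1::nat"]
    proof eventually_elim
      case (elim n)
      then show ?case using assms[OF elim] by simp
    qed
  qed
  from tendsto_add[OF this tendsto_const[of c]] show ?thesis by simp
qed

theorem theorem4p1:
  fixes M :: "'a measure" and N :: "'u measure" and U :: "'a \<Rightarrow> 'u"
    and r s :: "nat \<Rightarrow> real"
    and LR LS :: "nat \<Rightarrow> 'a \<Rightarrow> nat"
    and CG CA :: "nat \<Rightarrow> 'a \<Rightarrow> bool"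
  assumes "prob_space M"
    and r_prob: "r 0 = 0" "\<forall>i. 0 \<le> r i" "r sums 1"
    and s_prob: "s 0 = 0" "\<forall>i. 0 \<le> s i" "s sums 1"
    and mu_pos: "(\<Sum>i. r i * s i) > 0"
    and U_meas: "U \<in> measurable M N"
    and LR_meas: "\<forall>j. LR j \<in> measurable M (count_space UNIV)"
    and LS_meas: "\<forall>j. LS j \<in> measurable M (count_space UNIV)"
    and LR_dist: "\<forall>j\<ge>1. \<forall>i. prob_space.prob M {w \<in> space M. LR j w = i} = r i"
    and LS_dist: "\<forall>j\<ge>1. \<forall>i. prob_space.prob M {w \<in> space M. LS j w = i} = s i"
    and labels_indep: "prob_space.indep_vars M (\<lambda>_. count_space UNIV)
        (\<lambda>k w. case k of Inl j \<Rightarrow> LR j w | Inr j \<Rightarrow> LS j w) ({1..} <+> {1..})"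
    and U_indep: "prob_space.indep_set M (sets (vimage_algebra (space M) U N))
        (sets (vimage_algebra (space M)
           (\<lambda>w k. case k of Inl j \<Rightarrow> LR (Suc j) w | Inr j \<Rightarrow> LS (Suc j) w)
           (PiM UNIV (\<lambda>_::nat + nat. count_space UNIV))))"
    and sigma_pos: "sqrt (prob_space.variance M (\<lambda>w. s (LR 1 w)))
                    + sqrt (prob_space.variance M (\<lambda>w. r (LS 1 w))) > 0"
    and greedy: "greedy_policy M U N r s LR LS CG"
    and alternating: "alternating_policy M U N CA"
  shows "(\<lambda>n. (prob_space.expectation M (\<lambda>w. real (matches LR LS CG n w))
              - prob_space.expectation M (\<lambda>w. real (matches LR LS CA n w))) / real n)
         \<longlonglongrightarrow> (prob_space.variance M (\<lambda>w. s (LR 1 w))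
              + prob_space.variance M (\<lambda>w. r (LS 1 w))) / (8 * (\<Sum>i. r i * s i))"
proof -
  interpret S: setting M N U r s LR LS
    by (rule setting.intro[OF assms(1)], unfold_locales) (use assms in auto)
  have polG: "reading_policy M U N LR LS CG" using greedy by (simp add: greedy_policy_def)
  have grG: "\<forall>n\<ge>1. \<forall>w\<in>space M.
        (Gamma r LS (Scnt CG n w) w > Gamma s LR (Rcnt CG n w) w \<longrightarrow> CG (Suc n) w) \<and>
        (Gamma r LS (Scnt CG n w) w < Gamma s LR (Rcnt CG n w) w \<longrightarrow> \<not> CG (Suc n) w)"
    using greedy by (simp add: greedy_policy_def)
  have aU: "\<forall>n. CA n \<in> measurable (vimage_algebra (space M) U N) (count_space UNIV)"
    and aR0: "\<forall>n. \<forall>w\<in>space M. Rcnt CA (2 * n) w = n"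
    using alternating by (auto simp: alternating_policy_def)
  have polA: "reading_policy M U N LR LS CA"
    unfolding reading_policy_def using aU S.Uvimage_info by blast
  interpret G: policy M N U r s LR LS CG
    by (rule policy.intro[OF S.setting_axioms], unfold_locales) (rule polG)
  interpret A: policy M N U r s LR LS CA
    by (rule policy.intro[OF S.setting_axioms], unfold_locales) (rule polA)
  define mu where "mu = (\<Sum>i. r i * s i)"
  have muR: "S.muR = mu" and muS: "S.muS = mu" unfolding mu_def by (rule S.muR_eq, rule S.muS_eq)
  have mu0: "mu > 0" using mu_pos unfolding mu_def .
  define c where "c = (S.e2R + S.e2S - 2 * mu^2) / (8 * mu)"
  have target: "(S.variance (\<lambda>w. s (LR 1 w)) + S.variance (\<lambda>w. r (LS 1 w))) / (8 * (\<Sum>i. r i * s i)) = c"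
    unfolding S.varR S.varS c_def muR muS mu_def[symmetric] by (simp add: algebra_simps power2_eq_square)
  define K where "K = (\<bar>S.e2R - S.e2S\<bar> / (2 * mu) + 1 + mu^2) / (4 * mu)"
  have bound: "\<bar>(S.expectation (\<lambda>w. real (matches LR LS CG n w)) - S.expectation (\<lambda>w. real (matches LR LS CA n w))) / real n - c\<bar> \<le> K / real n"
    if n: "n \<ge> 1" for n
  proof -
    define EG where "EG = S.expectation (\<lambda>w. real (matches LR LS CG n w))"
    define EA where "EA = S.expectation (\<lambda>w. real (matches LR LS CA n w))"
    define rho where "rho = (\<Sum>k<n. G.pC k)"
    have EGM: "EG = S.expectation (G.MM n)" unfolding EG_def G.matches_MM by simp
    have EAM: "EA = S.expectation (A.MM n)" unfolding EA_def A.matches_MM by simp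
    obtain Q where Q: "0 \<le> Q" "Q \<le> 1" "4 * mu * EG = S.expectation (\<lambda>w. (G.aa n w + G.bb n w)^2) - Q"
      using G.greedy_facts(1)[OF grG, of n] unfolding EGM muR by blast
    have sq: "S.expectation (\<lambda>w. (G.aa n w + G.bb n w)^2) = mu^2 * real n * (real n - 1) + S.e2S * real n + (S.e2R - S.e2S) * rho"
      using G.Esq[of n] unfolding muR rho_def .
    have rb: "\<bar>mu * rho - mu * (real n - rho)\<bar> \<le> 1"
      using G.greedy_facts(2)[OF grG, of n] unfolding muR rho_def .
    have ea: "4 * EA = mu * (real n * real n - real (n mod 2))"
      using A.alt_EMM[OF aU aR0, of n] unfolding EAM muR .
    define del where "del = 2 * rho - real n"
    have del: "\<bar>del\<bar> \<le> 1 / mu"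
    proof -
      have "\<bar>mu * del\<bar> \<le> 1" using rb unfolding del_def by (simp add: algebra_simps)
      then have "mu * \<bar>del\<bar> \<le> 1" using mu0 by (simp add: abs_mult)
      then show ?thesis using mu0 by (simp add: field_simps)
    qed
    have c4: "4 * mu * c = (S.e2R + S.e2S - 2 * mu^2) / 2" unfolding c_def using mu0 by (simp add: field_simps)
    have rho_eq: "rho = (real n + del) / 2" unfolding del_def by simp
    have g: "4 * mu * EG = mu^2 * real n * (real n - 1) + S.e2S * real n + (S.e2R - S.e2S) * ((real n + del) / 2) - Q"
      using Q(3) sq rho_eq by simp
    have ea': "mu * (4 * EA) = mu * (mu * (real n * real n - real (n mod 2)))" using ea by simp
    have key: "4 * mu * (EG - EA - c * real n) = (S.e2R - S.e2S) * del / 2 - Q + mu^2 * real (n mod 2)"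
    proof -
      have "4 * mu * (EG - EA - c * real n) = (4 * mu * EG) - mu * (4 * EA) - (4 * mu * c) * real n"
        by (simp add: algebra_simps)
      also have "\<dots> = (mu^2 * real n * (real n - 1) + S.e2S * real n + (S.e2R - S.e2S) * ((real n + del) / 2) - Q)
          - mu * (mu * (real n * real n - real (n mod 2))) - ((S.e2R + S.e2S - 2 * mu^2) / 2) * real n"
        by (simp only: g ea' c4)
      also have "\<dots> = (S.e2R - S.e2S) * del / 2 - Q + mu^2 * real (n mod 2)"
        by (simp add: field_simps power2_eq_square)
      finally show ?thesis .
    qed
    have Zb: "\<bar>(S.e2R - S.e2S) * del / 2 - Q + mu^2 * real (n mod 2)\<bar> \<le> \<bar>S.e2R - S.e2S\<bar> / (2 * mu) + 1 + mu^2"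
    proof -
      have "\<bar>(S.e2R - S.e2S) * del / 2\<bar> \<le> \<bar>S.e2R - S.e2S\<bar> * (1 / mu) / 2"
      proof -
        have "\<bar>S.e2R - S.e2S\<bar> * \<bar>del\<bar> \<le> \<bar>S.e2R - S.e2S\<bar> * (1 / mu)"
          using del by (intro mult_left_mono) auto
        then show ?thesis by (simp add: abs_mult)
      qed
      moreover have "mu^2 * real (n mod 2) \<le> mu^2 * 1" by (intro mult_left_mono) auto
      moreover have "0 \<le> mu^2 * real (n mod 2)" by simp
      moreover have "\<bar>S.e2R - S.e2S\<bar> * (1 / mu) / 2 = \<bar>S.e2R - S.e2S\<bar> / (2 * mu)" by simp
      ultimately show ?thesis using Q(1,2) unfolding abs_le_iff by linarith
    qed
    have "(EG - EA) / real n - c = (EG - EA - c * real n) / real n" using n by (simp add: field_simps)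
    also have "EG - EA - c * real n = (4 * mu * (EG - EA - c * real n)) / (4 * mu)" using mu0 by simp
    also have "\<dots> = ((S.e2R - S.e2S) * del / 2 - Q + mu^2 * real (n mod 2)) / (4 * mu)" unfolding key ..
    finally have "\<bar>(EG - EA) / real n - c\<bar> = \<bar>(S.e2R - S.e2S) * del / 2 - Q + mu^2 * real (n mod 2)\<bar> / (4 * mu) / real n"
      using mu0 n by simp
    also have "\<dots> \<le> K / real n"
      unfolding K_def using Zb mu0 n by (intro divide_right_mono) auto
    finally show ?thesis unfolding EG_def EA_def .
  qed
  have "(\<lambda>n. (S.expectation (\<lambda>w. real (matches LR LS CG n w)) - S.expectation (\<lambda>w. real (matches LR LS CA n w))) / real n) \<longlonglongrightarrow> c"
    by (rule limit_helper[OF bound])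
  then show ?thesis unfolding target .
qed


end
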